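(* For all positive integers $s,t$ there exist a positive real $\beta_{s,t}$ and an integer $N_{s,t}$ such that for all $n\ge N_{s,t}$ and every valid quadruple $(\mathbf{x},\mathbf{k},\mathbf{y},\boldsymbol{\ell})$ with $\mathbf{x}$ of length $s$ and $\mathbf{y}$ of length $t$, $$\Pr[A(\mathbf{x},\mathbf{k},\mathbf{y},\boldsymbol{\ell})]\le \beta_{s,t}\,n^3\prod_{i\in S}f_i^{-3/2}\prod_{j\in T}g_j^{-3/2},$$ where $S=\{0\le i\le s: f_i\ge 16(s+t)\log n\}$ and $T=\{0\le j\le t: g_j\ge 16(s+t)\log n\}$.
   Context: The random Catalan-pair graph $CP_n$: points $1,\dots,2n$ on a line; each of $1,\dots,2n-1$ is colored red/blue independently and uniformly, and $2n$ is colored so that the number of red points is even; then a uniformly random non-crossing perfect matching (Catalan-arc matching: no $a<b<c<d$ with $\{a,c\},\{b,d\}$ both arcs) is placed independently on the red points and on the blue points; vertices are arcs, adjacent iff their endpoints alternate. Points $a<b$ match if they have the same color and are joined by an arc. Let $\mathbf{x}=(x_1<\dots<x_s)$, $\mathbf{k}=(k_1,\dots,k_s)$, $\mathbf{y}=(y_1<\dots<y_t)$, $\boldsymbol\ell=(\ell_1,\dots,\ell_t)$ be tuples of positive integers with $1\le x_i<x_i+k_i\le2n$ and $1\le y_j<y_j+\ell_j\le 2n$. The quadruple is valid if there exist a coloring of $1,\dots,2n$ with an even number of red points and Catalan-arc matchings on the red and blue points such that every $x_i,x_i+k_i$ is red and $x_i$ is matched to $x_i+k_i$, and every $y_j,y_j+\ell_j$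 is blue and $y_j$ is matched to $y_j+\ell_j$. $A(\mathbf{x},\mathbf{k},\mathbf{y},\boldsymbol\ell)$ is the event that in $CP_n$: all $x_i,x_i+k_i$ are red and all $y_j,y_j+\ell_j$ are blue; for each $i$ the number of red points strictly between $x_i$ and $x_i+k_i$ is even and for each $j$ the number of blue points strictly between $y_j$ and $y_j+\ell_j$ is even; and $(x_i,x_i+k_i)$ and $(y_j,y_j+\ell_j)$ match for all $i,j$. For $1\le i\le s$, $f_i$ is the number of points $x$ with $x_i<x<x_i+k_i$ that do not lie in any interval $[x_{i'},x_{i'}+k_{i'}]$ with $i'\ne i$ nested inside $[x_i,x_i+k_i]$, and are not of the form $y_j$ or $y_j+\ell_j$; $f_0$ is the number of $x\in\{1,\dots,2n\}$ lying in no interval $[x_i,x_i+k_i]$ and not of the form $y_j$ or $y_j+\ell_j$. $g_0,\dots,g_t$ are defined symmetrically with the roles of $(\mathbf{x},\mathbf{k})$ and $(\mathbf{y},\boldsymbol\ell)$ exchanged. *)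

theory Defs
  imports "HOL-Probability.Probability"
begin

text \<open>Points are 1..2n. A configuration is (R, Mr, Mb): R is the set of red points,
  Mr the arcs on red points, Mb the arcs on blue points. An arc is a pair (a,b) with a<b.\<close>

type_synonym config = "nat set \<times> (nat \<times> nat) set \<times> (nat \<times> nat) set"

definition matched :: "(nat \<times> nat) set \<Rightarrow> nat \<Rightarrow> nat \<Rightarrow> bool" where
  "matched M p q \<longleftrightarrow> (p, q) \<in> M \<or> (q, p) \<in> M"

definition perfect_matching_on :: "nat set \<Rightarrow> (nat \<times> nat) set \<Rightarrow> bool" where
  "perfect_matching_on P M \<longleftrightarrow>
     M \<subseteq> {(a, b). a \<in> P \<and> b \<in> P \<and> a < b} \<and> (\<forall>p\<in>P. \<exists>!q. matched M p q)"

definition noncrossing :: "(nat \<times> nat) set \<Rightarrow> bool" where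
  "noncrossing M \<longleftrightarrow> \<not> (\<exists>a b c d. a < b \<and> b < c \<and> c < d \<and> (a, c) \<in> M \<and> (b, d) \<in> M)"

definition catalan_matchings :: "nat set \<Rightarrow> (nat \<times> nat) set set" where
  "catalan_matchings P = {M. perfect_matching_on P M \<and> noncrossing M}"

text \<open>The random Catalan-pair graph CP_n (as a random configuration): points 1..2n-1 are
  coloured independently uniformly (red set C uniform in the powerset of {1..<2n}); point 2n is
  red iff this makes the number of red points even; then independent uniform Catalan-arc
  matchings on red and on blue points.\<close>
definition CP :: "nat \<Rightarrow> config pmf" where
  "CP n = do {
     C \<leftarrow> pmf_of_set (Pow {1..<2*n});
     let R = (if even (card C) then C else insert (2*n) C);
     Mr \<leftarrow> pmf_of_set (catalan_matchings R);
     Mb \<leftarrow> pmf_of_set (catalan_matchings ({1..2*n} - R));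
     return_pmf (R, Mr, Mb) }"

text \<open>Tuples: x, k, y, l are lists; index i (0-based) of a list corresponds to index i+1 in the paper.\<close>

definition valid_quad :: "nat \<Rightarrow> nat list \<Rightarrow> nat list \<Rightarrow> nat list \<Rightarrow> nat list \<Rightarrow> bool" where
  "valid_quad n x k y l \<longleftrightarrow>
     (\<exists>R Mr Mb. R \<subseteq> {1..2*n} \<and> even (card R) \<and>
        Mr \<in> catalan_matchings R \<and> Mb \<in> catalan_matchings ({1..2*n} - R) \<and>
        (\<forall>i<length x. x!i \<in> R \<and> x!i + k!i \<in> R \<and> (x!i, x!i + k!i) \<in> Mr) \<and>
        (\<forall>j<length y. y!j \<in> {1..2*n} - R \<and> y!j + l!j \<in> {1..2*n} - R \<and> (y!j, y!j + l!j) \<in> Mb))"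

definition event_A :: "nat \<Rightarrow> nat list \<Rightarrow> nat list \<Rightarrow> nat list \<Rightarrow> nat list \<Rightarrow> config set" where
  "event_A n x k y l = {(R, Mr, Mb).
     (\<forall>i<length x. x!i \<in> R \<and> x!i + k!i \<in> R \<and>
         even (card {p \<in> R. x!i < p \<and> p < x!i + k!i}) \<and> (x!i, x!i + k!i) \<in> Mr) \<and>
     (\<forall>j<length y. y!j \<in> {1..2*n} - R \<and> y!j + l!j \<in> {1..2*n} - R \<and>
         even (card {p \<in> {1..2*n} - R. y!j < p \<and> p < y!j + l!j}) \<and> (y!j, y!j + l!j) \<in> Mb)}"

text \<open>free_count n x k y l 0 = f_0, and free_count n x k y l (Suc i) = f_(i+1)
  (the paper's f_(i+1), i.e. for the 0-based list index i). The g's are obtained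
  by swapping the roles of (x,k) and (y,l).\<close>
fun free_count :: "nat \<Rightarrow> nat list \<Rightarrow> nat list \<Rightarrow> nat list \<Rightarrow> nat list \<Rightarrow> nat \<Rightarrow> nat" where
  "free_count n x k y l 0 =
     card {p \<in> {1..2*n}. (\<forall>i<length x. \<not> (x!i \<le> p \<and> p \<le> x!i + k!i)) \<and>
                         (\<forall>j<length y. p \<noteq> y!j \<and> p \<noteq> y!j + l!j)}"
| "free_count n x k y l (Suc i) =
     card {p. x!i < p \<and> p < x!i + k!i \<and>
        (\<forall>i'<length x. i' \<noteq> i \<and> x!i \<le> x!i' \<and> x!i' + k!i' \<le> x!i + k!i
                \<longrightarrow> \<not> (x!i' \<le> p \<and> p \<le> x!i' + k!i')) \<and>
        (\<forall>j<length y. p \<noteq> y!j \<and> p \<noteq> y!j + l!j)}"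

end

theory Submission
  imports Defs
begin

fun ballot :: "nat \<Rightarrow> nat \<Rightarrow> nat" where
  "ballot 0 h = (if h = 0 then 1 else 0)"
| "ballot (Suc u) h = (if h > 0 then ballot u (h-1) else 0) + ballot u (Suc h)"


definition bb :: "nat \<Rightarrow> int \<Rightarrow> int" where
  "bb u j = (if j < 0 then 0 else int (u choose nat j))"

lemma bb_pascal: "bb (Suc u) j = bb u j + bb u (j - 1)"
proof (cases "j \<le> 0")
  case True
  then show ?thesis by (cases "j = 0") (auto simp: bb_def)
next
  case False
  then have "nat j = Suc (nat (j - 1))" by auto
  then show ?thesis using False by (simp add: bb_def)
qed

lemma ballot_odd: "odd (u + h) \<Longrightarrow> ballot u h = 0"
proof (induction u arbitrary: h)
  case 0 then show ?case by (simp add: odd_pos)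
next
  case (Suc u)
  then show ?case by (cases h) auto
qed

lemma ballot_closed:
  "even (u + h) \<Longrightarrow> int (ballot u h) = bb u ((int u - int h) div 2) - bb u ((int u - int h) div 2 - 1)"
proof (induction u arbitrary: h)
  case 0
  then show ?case
  proof (cases "h = 0")
    case True then show ?thesis by (simp add: bb_def)
  next
    case False
    then have "(0 - int h) div 2 < 0" by auto
    then show ?thesis using False by (simp add: bb_def)
  qed
next
  case (Suc u)
  define j where "j = (int (Suc u) - int h) div 2"
  have ev: "even (int (Suc u) - int h)" using Suc.prems by (simp add: even_add)
  show ?case
  proof (cases "h > 0")
    case True
    have e1: "even (u + (h - 1))" using Suc.prems True by (cases h) auto
    have e2: "even (u + Suc h)" using Suc.prems by auto
    have j1: "(int u - int (h - 1)) div 2 = j" using True j_def by (simp add: of_nat_diff)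
    have j2: "(int u - int (Suc h)) div 2 = j - 1"
    proof -
      have "int u - int (Suc h) = (int (Suc u) - int h) + (-1) * 2" by simp
      then show ?thesis unfolding j_def by (simp only: div_mult_self1)
    qed
    have "int (ballot (Suc u) h) = int (ballot u (h - 1)) + int (ballot u (Suc h))" using True by simp
    also have "\<dots> = bb u j - bb u (j - 1) + (bb u (j - 1) - bb u (j - 1 - 1))"
      using Suc.IH[OF e1] Suc.IH[OF e2] j1 j2 by simp
    also have "\<dots> = bb (Suc u) j - bb (Suc u) (j - 1)" by (simp add: bb_pascal)
    finally show ?thesis using j_def by simp
  next
    case False
    then have h0: "h = 0" by auto
    then have odd: "odd u" using Suc.prems by auto
    then obtain c where c: "u = 2 * c + 1" by (metis oddE)
    have jc: "j = int c + 1" using j_def h0 c by simp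
    have IH: "int (ballot u 1) = bb u (int c) - bb u (int c - 1)"
      using Suc.IH[of 1] odd c by simp
    have sym: "bb u (int c + 1) = bb u (int c)"
    proof -
      have "u choose (c+1) = u choose (u - (c+1))" using c by (subst binomial_symmetric) auto
      also have "u - (c+1) = c" using c by auto
      finally show ?thesis by (simp add: bb_def nat_add_distrib)
    qed
    have "int (ballot (Suc u) h) = int (ballot u 1)" using h0 by simp
    also have "\<dots> = bb u (int c) - bb u (int c - 1)" by (rule IH)
    also have "\<dots> = bb u j + bb u (j - 1) - (bb u (j - 1) + bb u (j - 1 - 1))"
      using sym jc by simp
    also have "\<dots> = bb (Suc u) j - bb (Suc u) (j - 1)" by (simp add: bb_pascal)
    finally show ?thesis using j_def h0 by simp
  qed
qed

lemma ballot_cat: "real (ballot (2 * a) 0) = real (2 * a choose a) / (real a + 1)"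
proof (cases a)
  case 0 then show ?thesis by simp
next
  case (Suc c)
  have "int (ballot (2*a) 0) = bb (2*a) (int a) - bb (2*a) (int a - 1)"
    using ballot_closed[of "2*a" 0] by simp
  also have "\<dots> = int (2*a choose a) - int (2*a choose c)" using Suc by (simp add: bb_def nat_add_distrib del: binomial_Suc_Suc)
  finally have e: "real (ballot (2*a) 0) = real (2*a choose a) - real (2*a choose c)"
    by (metis of_int_diff of_int_of_nat_eq)
  have k: "Suc c * (Suc (c + Suc c) choose Suc c) = Suc (Suc c) * (Suc (c + Suc c) choose c)"
    by (rule Suc_times_binomial_add)
  have sc: "Suc (c + Suc c) = 2 * a" using Suc by simp
  have k2: "a * (2*a choose a) = Suc a * (2*a choose c)"
    using k unfolding sc by (simp only: Suc[symmetric])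
  then have k': "real a * real (2*a choose a) = (real a + 1) * real (2*a choose c)"
    by (metis of_nat_Suc of_nat_mult add.commute)
  have a1: "real a + 1 > 0" by simp
  have "real (ballot (2*a) 0) * (real a + 1) = (real (2*a choose a) - real (2*a choose c)) * (real a + 1)"
    using e by simp
  also have "\<dots> = real (2*a choose a) * (real a + 1) - (real a + 1) * real (2*a choose c)"
    by (simp add: algebra_simps)
  also have "\<dots> = real (2*a choose a)" using k' by (simp add: algebra_simps)
  finally have "real (ballot (2*a) 0) * (real a + 1) = real (2*a choose a)" .
  then show ?thesis using a1 by (simp add: eq_divide_eq)
qed

lemma central_ratio_nat: "(2 * Suc a choose Suc a) * (a + 1) = 2 * (2 * a + 1) * (2 * a choose a)"
proof -
  have 1: "Suc (2*a+1) * ((2*a+1) choose a) = (Suc (2*a+1) choose Suc a) * Suc a"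
    by (rule Suc_times_binomial_eq)
  have 2: "Suc (2*a) * ((2*a) choose a) = (Suc (2*a) choose Suc a) * Suc a"
    by (rule Suc_times_binomial_eq)
  have 3: "(Suc (2*a) choose Suc a) = (Suc (2*a) choose a)"
    by (subst binomial_symmetric) auto
  have e1: "Suc (2*a+1) = 2 * Suc a" by simp
  have "(2 * Suc a choose Suc a) * (a + 1) * (a + 1) = Suc (2*a+1) * ((2*a+1) choose a) * (a + 1)"
    using 1 e1 by simp
  also have "\<dots> = Suc (2*a+1) * (((2*a+1) choose a) * Suc a)" by simp
  also have "((2*a+1) choose a) * Suc a = Suc (2*a) * ((2*a) choose a)" using 2 3 by simp
  also have "Suc (2*a+1) * (Suc (2*a) * ((2*a) choose a)) = (2 * (2 * a + 1) * (2 * a choose a)) * (a + 1)"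
    by (simp add: algebra_simps)
  finally have fin: "(2 * Suc a choose Suc a) * (a + 1) * (a + 1) = (2 * (2 * a + 1) * (2 * a choose a)) * (a + 1)" .
  have ne: "a + 1 \<noteq> (0::nat)" by simp
  show ?thesis using fin by (simp only: mult_right_cancel[OF ne])
qed

definition cbin :: "nat \<Rightarrow> real" where "cbin a = real (2 * a choose a)"

lemma cbin_ratio: "cbin (Suc a) * (real a + 1) = 2 * (2 * real a + 1) * cbin a"
proof -
  have "real ((2 * Suc a choose Suc a) * (a + 1)) = real (2 * (2 * a + 1) * (2 * a choose a))"
    using central_ratio_nat[of a] by (simp only:)
  then show ?thesis unfolding cbin_def by (simp only: of_nat_mult of_nat_add of_nat_1 of_nat_numeral)
qed

lemma pw32: "(x::real) > 0 \<Longrightarrow> (x powr (-3/2)) ^ 2 * x ^ 3 = 1"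
proof -
  assume x: "x > 0"
  have "(x powr (-3/2)) ^ 2 = x powr (-3/2) * x powr (-3/2)" by (simp add: power2_eq_square)
  also have "\<dots> = x powr (-3)" by (simp add: powr_add[symmetric])
  finally have 1: "(x powr (-3/2)) ^ 2 = x powr (-3)" .
  have 2: "x ^ 3 = x powr 3" using powr_realpow[OF x, of 3] by simp
  have 3: "x powr (-3) * x powr 3 = 1" using x by (subst powr_add[symmetric]) simp
  show ?thesis unfolding 1 2 using 3 .
qed

lemma cbin_Suc: "cbin (Suc a) = 2 * (2 * real a + 1) * cbin a / (real a + 1)"
proof -
  have "real a + 1 > 0" by simp
  then show ?thesis using cbin_ratio[of a] by (simp add: eq_divide_eq)
qed

lemma cbin_nonneg: "cbin a \<ge> 0" by (simp add: cbin_def)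

lemma central_upper: "cbin a ^ 2 * (real a + 1) \<le> 16 ^ a"
proof (induction a)
  case 0 then show ?case by (simp add: cbin_def)
next
  case (Suc a)
  define c where "c = cbin a"
  have a1: "real a + 1 > 0" by simp
  have r: "cbin (Suc a) * (real a + 1) = 2 * (2 * real a + 1) * c"
    using cbin_ratio c_def by simp
  have poly: "(2 * real a + 1) ^ 2 * (real a + 2) \<le> 4 * (real a + 1) ^ 3"
    by (simp add: power2_eq_square power3_eq_cube algebra_simps)
  have IH: "c ^ 2 * (real a + 1) \<le> 16 ^ a" using Suc c_def by simp
  have "(cbin (Suc a) ^ 2 * (real (Suc a) + 1)) * (real a + 1) ^ 2
        = (cbin (Suc a) * (real a + 1)) ^ 2 * (real a + 2)"
    by (simp add: power2_eq_square algebra_simps)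
  also have "\<dots> = 4 * c ^ 2 * ((2 * real a + 1) ^ 2 * (real a + 2))"
    unfolding r by (simp add: power2_eq_square algebra_simps)
  also have "\<dots> \<le> 4 * c ^ 2 * (4 * (real a + 1) ^ 3)"
    by (rule mult_left_mono[OF poly]) simp
  also have "\<dots> = 16 * (c ^ 2 * (real a + 1)) * (real a + 1) ^ 2"
    by (simp add: power2_eq_square power3_eq_cube algebra_simps)
  also have "\<dots> \<le> 16 * 16 ^ a * (real a + 1) ^ 2"
    using IH by simp
  finally have "(cbin (Suc a) ^ 2 * (real (Suc a) + 1)) * (real a + 1) ^ 2 \<le> 16 ^ Suc a * (real a + 1) ^ 2"
    by simp
  then show ?case using a1 by (simp add: mult_le_cancel_right)
qed

lemma central_lower: "a \<ge> 1 \<Longrightarrow> 16 ^ a \<le> 4 * real a * cbin a ^ 2"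
proof (induction a rule: dec_induct)
  case base then show ?case by (simp add: cbin_def numeral_2_eq_2)
next
  case (step a)
  define c where "c = cbin a"
  have a1: "real a + 1 > 0" by simp
  have r: "cbin (Suc a) * (real a + 1) = 2 * (2 * real a + 1) * c"
    using cbin_ratio c_def by simp
  have IH: "16 ^ a \<le> 4 * real a * c ^ 2" using step c_def by simp
  have poly: "4 * real a * (real a + 1) \<le> (2 * real a + 1) ^ 2"
    by (simp add: power2_eq_square algebra_simps)
  have "16 ^ Suc a * (real a + 1) \<le> 16 * (4 * real a * c ^ 2) * (real a + 1)"
    using IH by simp
  also have "\<dots> = 16 * c ^ 2 * (4 * real a * (real a + 1))" by (simp add: algebra_simps)
  also have "\<dots> \<le> 16 * c ^ 2 * (2 * real a + 1) ^ 2"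
    by (rule mult_left_mono[OF poly]) simp
  also have "\<dots> = 4 * (real a + 1) * (cbin (Suc a) * (real a + 1)) ^ 2 / (real a + 1)"
    unfolding r using a1 by (simp add: power2_eq_square field_simps)
  also have "\<dots> = (4 * real (Suc a) * cbin (Suc a) ^ 2) * (real a + 1)"
    using a1 by (simp add: power2_eq_square field_simps)
  finally show ?case using a1 by (simp add: mult_le_cancel_right)
qed

lemma h16: "(16::real) ^ a = (4 ^ a) ^ 2"
proof -
  have 1: "(4::real) ^ (2 * a) = (4 ^ 2) ^ a" by (rule power_mult)
  have 2: "(4::real) ^ (a * 2) = (4 ^ a) ^ 2" by (rule power_mult)
  show ?thesis using 1 2 by (simp add: mult.commute)
qed

lemma cat_upper: "real (ballot (2 * a) 0) \<le> 4 ^ a * (real a + 1) powr (-3/2)"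
proof -
  define K where "K = real (ballot (2 * a) 0)"
  define x where "x = real a + 1"
  have x: "x > 0" using x_def by simp
  have K: "K * x = cbin a" using ballot_cat K_def x_def cbin_def x by (simp add: field_simps)
  have "K ^ 2 * x ^ 3 = (K * x) ^ 2 * x" by (simp add: power2_eq_square power3_eq_cube)
  also have "\<dots> = cbin a ^ 2 * x" using K by simp
  also have "\<dots> \<le> 16 ^ a" using central_upper x_def by simp
  also have "\<dots> = (4 ^ a * x powr (-3/2)) ^ 2 * x ^ 3"
    unfolding h16 power_mult_distrib using pw32[OF x] by (simp add: mult.assoc)
  finally have "K ^ 2 * x ^ 3 \<le> (4 ^ a * x powr (-3/2)) ^ 2 * x ^ 3" .
  then have "K ^ 2 \<le> (4 ^ a * x powr (-3/2)) ^ 2" using x by (simp add: mult_le_cancel_right)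
  then show ?thesis unfolding K_def x_def by (rule power2_le_imp_le) simp
qed

lemma cat_lower: "4 ^ a * (real a + 1) powr (-3/2) / 2 \<le> real (ballot (2 * a) 0)"
proof -
  define K where "K = real (ballot (2 * a) 0)"
  define x where "x = real a + 1"
  have x: "x > 0" using x_def by simp
  have K: "K * x = cbin a" using ballot_cat K_def x_def cbin_def x by (simp add: field_simps)
  have k2: "16 ^ a \<le> 4 * (K ^ 2 * x ^ 3)"
  proof (cases "a = 0")
    case True then show ?thesis using K x_def by (simp add: cbin_def)
  next
    case False
    have "16 ^ a \<le> 4 * real a * cbin a ^ 2" using central_lower False by simp
    also have "\<dots> \<le> 4 * x * cbin a ^ 2" using x_def by (simp add: mult_right_mono)
    also have "\<dots> = 4 * ((K * x) ^ 2 * x)" using K by (simp add: algebra_simps)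
    also have "\<dots> = 4 * (K ^ 2 * x ^ 3)" by (simp add: power2_eq_square power3_eq_cube)
    finally show ?thesis .
  qed
  have "(4 ^ a * x powr (-3/2) / 2) ^ 2 * x ^ 3 = 16 ^ a / 4"
    unfolding h16 power_mult_distrib power_divide using pw32[OF x] by (simp add: mult.assoc)
  also have "\<dots> \<le> K ^ 2 * x ^ 3" using k2 by simp
  finally have "(4 ^ a * x powr (-3/2) / 2) ^ 2 \<le> K ^ 2" using x by (simp add: mult_le_cancel_right)
  then show ?thesis unfolding K_def x_def by (rule power2_le_imp_le) simp
qed

lemma cm_finite: "finite P \<Longrightarrow> finite (catalan_matchings P)"
  by (rule finite_subset[of _ "Pow (P \<times> P)"])
     (auto simp: catalan_matchings_def perfect_matching_on_def)

lemma cm_arc: "M \<in> catalan_matchings P \<Longrightarrow> (a,b) \<in> M \<Longrightarrow> a \<in> P \<and> b \<in> P \<and> a < b"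
  by (auto simp: catalan_matchings_def perfect_matching_on_def)

lemma cm_unique: "M \<in> catalan_matchings P \<Longrightarrow> matched M p q \<Longrightarrow> matched M p q' \<Longrightarrow> q = q'"
proof -
  assume M: "M \<in> catalan_matchings P" and a: "matched M p q" and b: "matched M p q'"
  have "p \<in> P" using a cm_arc[OF M] by (auto simp: matched_def)
  then have "\<exists>!q. matched M p q" using M by (auto simp: catalan_matchings_def perfect_matching_on_def)
  thus ?thesis using a b by blast
qed

lemma cm_exists: "M \<in> catalan_matchings P \<Longrightarrow> p \<in> P \<Longrightarrow> \<exists>q. matched M p q"
  by (auto simp: catalan_matchings_def perfect_matching_on_def)

lemma cm_nc: "M \<in> catalan_matchings P \<Longrightarrow> (a,c) \<in> M \<Longrightarrow> (b,d) \<in> M \<Longrightarrow> a < b \<Longrightarrow> b < c \<Longrightarrow> c < d \<Longrightarrow> False"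
  by (auto simp: catalan_matchings_def noncrossing_def)

definition NCext :: "nat set \<Rightarrow> nat set \<Rightarrow> (nat \<times> nat) set set" where
  "NCext P H = {M \<in> catalan_matchings (H \<union> P). \<forall>a b. (a,b) \<in> M \<longrightarrow> \<not> (a \<in> H \<and> b \<in> H)}"


lemma NCext_empty: "NCext {} H = (if H = {} then {{}} else {})"
proof (cases "H = {}")
  case True
  then show ?thesis
    by (auto simp: NCext_def catalan_matchings_def perfect_matching_on_def noncrossing_def)
next
  case False
  then obtain h where h: "h \<in> H" by auto
  have "M \<notin> NCext {} H" for M
  proof
    assume "M \<in> NCext {} H"
    then have M: "M \<in> catalan_matchings H" and nh: "\<forall>a b. (a,b) \<in> M \<longrightarrow> \<not> (a \<in> H \<and> b \<in> H)"
      by (auto simp: NCext_def)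
    obtain q where "matched M h q" using cm_exists[OF M h] by auto
    then show False using cm_arc[OF M] nh by (auto simp: matched_def)
  qed
  then show ?thesis using False by auto
qed

lemma matched_insert: "matched (insert (a,b) N) r q \<longleftrightarrow> matched N r q \<or> (r = a \<and> q = b) \<or> (r = b \<and> q = a)"
  by (auto simp: matched_def)

lemma NCext_partner_max:
  assumes M: "M \<in> NCext P H" and fP: "finite P" "P \<noteq> {}" and fH: "finite H"
    and lt: "\<forall>h\<in>H. h < Min P" and hH: "h \<in> H" and hp: "(h, Min P) \<in> M"
  shows "h = Max H"
proof (rule ccontr)
  assume ne: "h \<noteq> Max H"
  define p where "p = Min P"
  define m where "m = Max H"
  have mH: "m \<in> H" using hH fH m_def by (metis Max_in empty_iff)
  have hm: "h < m" using ne hH fH m_def by (meson Max_ge le_neq_implies_less)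
  have mp: "m < p" using lt mH p_def by auto
  have cm: "M \<in> catalan_matchings (H \<union> P)" and nh: "\<forall>a b. (a,b) \<in> M \<longrightarrow> \<not> (a \<in> H \<and> b \<in> H)"
    using M by (auto simp: NCext_def)
  obtain q where q: "matched M m q" using cm_exists[OF cm] mH by auto
  have Pge: "r \<in> P \<Longrightarrow> p \<le> r" for r using fP p_def by auto
  have "(m, q) \<in> M"
  proof -
    { assume "(q, m) \<in> M"
      then have "q \<in> H \<union> P" "q < m" using cm_arc[OF cm] by auto
      moreover have "q \<notin> H" using nh \<open>(q,m) \<in> M\<close> mH by auto
      ultimately have False using Pge mp by fastforce }
    then show ?thesis using q by (auto simp: matched_def)
  qed
  then have "q \<in> H \<union> P" "m < q" "q \<notin> H" using cm_arc[OF cm] nh mH by auto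
  then have "p \<le> q" using Pge by auto
  moreover have "q \<noteq> p"
  proof
    assume "q = p"
    then have "matched M p m" "matched M p h" using \<open>(m,q) \<in> M\<close> hp p_def by (auto simp: matched_def)
    then show False using cm_unique[OF cm] hm by blast
  qed
  ultimately have "p < q" by auto
  show False using cm_nc[OF cm hp[folded p_def] \<open>(m,q) \<in> M\<close> hm mp \<open>p < q\<close>] .
qed

lemma NCext_X2:
  assumes "p = Min P" "finite P" "P \<noteq> {}" "\<forall>h\<in>H. h < p"
  shows "NCext (P - {p}) (insert p H) = {M \<in> NCext P H. \<forall>h\<in>H. (h,p) \<notin> M}"
proof -
  have pP: "p \<in> P" using assms by auto
  have eq: "insert p H \<union> (P - {p}) = H \<union> P" using pP by auto
  show ?thesis
  proof (intro equalityI subsetI)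
    fix M assume "M \<in> NCext (P - {p}) (insert p H)"
    then have M: "M \<in> catalan_matchings (H \<union> P)"
      and nh: "\<forall>a b. (a,b) \<in> M \<longrightarrow> \<not> (a \<in> insert p H \<and> b \<in> insert p H)"
      unfolding NCext_def eq by auto
    show "M \<in> {M \<in> NCext P H. \<forall>h\<in>H. (h,p) \<notin> M}" unfolding NCext_def using M nh by blast
  next
    fix M assume "M \<in> {M \<in> NCext P H. \<forall>h\<in>H. (h,p) \<notin> M}"
    then have M: "M \<in> catalan_matchings (H \<union> P)"
      and nh: "\<forall>a b. (a,b) \<in> M \<longrightarrow> \<not> (a \<in> H \<and> b \<in> H)" and np: "\<forall>h\<in>H. (h, p) \<notin> M"
      unfolding NCext_def by auto
    have "\<forall>a b. (a,b) \<in> M \<longrightarrow> \<not> (a \<in> insert p H \<and> b \<in> insert p H)"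
    proof (intro allI impI notI)
      fix a b assume ab: "(a,b) \<in> M" and a: "a \<in> insert p H \<and> b \<in> insert p H"
      have lt: "a < b" using cm_arc[OF M ab] by simp
      show False
      proof (cases "a = p")
        case True then show False using a lt assms(4) by auto
      next
        case False then have "a \<in> H" using a by auto
        then show False using a ab nh np by auto
      qed
    qed
    then show "M \<in> NCext (P - {p}) (insert p H)" unfolding NCext_def eq using M by blast
  qed
qed

lemma NCext_X1:
  assumes pdef: "p = Min P" and fP: "finite P" "P \<noteq> {}" and fH: "finite H" "H \<noteq> {}"
    and lt: "\<forall>h\<in>H. h < p" and mdef: "m = Max H"
  shows "{M \<in> NCext P H. (m,p) \<in> M} = insert (m,p) ` NCext (P - {p}) (H - {m})"
proof -
  have pP: "p \<in> P" using assms by auto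
  have mH: "m \<in> H" using fH mdef by auto
  have mp: "m < p" using lt mH by auto
  have Pge: "r \<in> P \<Longrightarrow> p \<le> r" for r using fP pdef by auto
  have Hle: "r \<in> H \<Longrightarrow> r \<le> m" for r using fH mdef by auto
  have fwd: "insert (m,p) N \<in> NCext P H" if N: "N \<in> NCext (P - {p}) (H - {m})" for N
  proof -
    have cN: "N \<in> catalan_matchings ((H - {m}) \<union> (P - {p}))"
      and nh: "\<forall>a b. (a,b) \<in> N \<longrightarrow> \<not> (a \<in> H - {m} \<and> b \<in> H - {m})"
      using N by (auto simp: NCext_def)
    have arcN: "(a,b) \<in> N \<Longrightarrow> a \<in> (H - {m}) \<union> (P - {p}) \<and> b \<in> (H - {m}) \<union> (P - {p}) \<and> a < b" for a b
      using cm_arc[OF cN] by blast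
    have pm: "perfect_matching_on (H \<union> P) (insert (m,p) N)"
      unfolding perfect_matching_on_def
    proof (intro conjI ballI)
      show "insert (m, p) N \<subseteq> {(a, b). a \<in> H \<union> P \<and> b \<in> H \<union> P \<and> a < b}"
        using arcN mH pP mp by auto
    next
      fix r assume r: "r \<in> H \<union> P"
      show "\<exists>!q. matched (insert (m, p) N) r q"
      proof (cases "r = m \<or> r = p")
        case True
        have "\<not> matched N r q" for q using True arcN mp Pge mH lt by (fastforce simp: matched_def)
        then show ?thesis unfolding matched_insert using True mp by auto
      next
        case False
        then have r': "r \<in> (H - {m}) \<union> (P - {p})" using r by auto
        obtain q where q: "matched N r q" using cm_exists[OF cN r'] by auto
        have uq: "matched N r q' \<Longrightarrow> q' = q" for q' using cm_unique[OF cN] q by blast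
        show ?thesis unfolding matched_insert using False q uq by auto
      qed
    qed
    have nc: "noncrossing (insert (m,p) N)"
      unfolding noncrossing_def
    proof (clarify)
      fix a b c d assume o: "a < b" "b < c" "c < d" and ac: "(a,c) \<in> insert (m,p) N" and bd: "(b,d) \<in> insert (m,p) N"
      show False
      proof (cases "(a,c) = (m,p)")
        case True
        then have "(b,d) \<in> N" using bd o by auto
        then have "b \<in> (H - {m}) \<union> (P - {p})" using arcN by blast
        then show False using True o Pge Hle by fastforce
      next
        case F1: False
        then have acN: "(a,c) \<in> N" using ac by auto
        show False
        proof (cases "(b,d) = (m,p)")
          case True
          have "c \<in> (H - {m}) \<union> (P - {p})" "a \<in> (H - {m}) \<union> (P - {p})" using arcN acN by blast+
          then have "c \<in> H - {m}" "a \<in> H - {m}" using True o Pge by fastforce+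
          then show False using nh acN by blast
        next
          case False
          then have "(b,d) \<in> N" using bd by auto
          then show False using cm_nc[OF cN acN _ o] by blast
        qed
      qed
    qed
    have "\<forall>a b. (a,b) \<in> insert (m,p) N \<longrightarrow> \<not> (a \<in> H \<and> b \<in> H)"
    proof (intro allI impI notI)
      fix a b
      assume ab: "(a,b) \<in> insert (m,p) N" "a \<in> H \<and> b \<in> H"
      show False
      proof (cases "(a,b) = (m,p)")
        case True then show ?thesis using ab lt by auto
      next
        case False
        then have "(a,b) \<in> N" using ab by auto
        then have "a \<in> H - {m}" "b \<in> H - {m}" using arcN[OF \<open>(a,b) \<in> N\<close>] ab lt Pge by fastforce+
        then show ?thesis using nh \<open>(a,b) \<in> N\<close> by blast
      qed
    qed
    then show ?thesis unfolding NCext_def catalan_matchings_def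
      using pm nc by auto
  qed
  have bwd: "M - {(m,p)} \<in> NCext (P - {p}) (H - {m})" if M: "M \<in> NCext P H" "(m,p) \<in> M" for M
  proof -
    have cM: "M \<in> catalan_matchings (H \<union> P)" and nh: "\<forall>a b. (a,b) \<in> M \<longrightarrow> \<not> (a \<in> H \<and> b \<in> H)"
      using M by (auto simp: NCext_def)
    have um: "matched M m q \<Longrightarrow> q = p" for q using cm_unique[OF cM, of m q p] M(2) by (auto simp: matched_def)
    have up: "matched M p q \<Longrightarrow> q = m" for q using cm_unique[OF cM, of p q m] M(2) by (auto simp: matched_def)
    have arc: "(a,b) \<in> M - {(m,p)} \<Longrightarrow> a \<in> (H - {m}) \<union> (P - {p}) \<and> b \<in> (H - {m}) \<union> (P - {p}) \<and> a < b" for a b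
    proof -
      assume ab: "(a,b) \<in> M - {(m,p)}"
      then have "a \<in> H \<union> P" "b \<in> H \<union> P" "a < b" using cm_arc[OF cM] by auto
      moreover have "a \<noteq> m" using um ab by (auto simp: matched_def)
      moreover have "b \<noteq> p" using up ab by (auto simp: matched_def)
      moreover have "a \<noteq> p" using up[of b] ab \<open>a < b\<close> mp by (auto simp: matched_def)
      moreover have "b \<noteq> m" using um[of a] ab \<open>a < b\<close> mp by (auto simp: matched_def)
      ultimately show ?thesis by auto
    qed
    have pm: "perfect_matching_on ((H - {m}) \<union> (P - {p})) (M - {(m,p)})"
      unfolding perfect_matching_on_def
    proof (intro conjI ballI)
      show "M - {(m, p)} \<subseteq> {(a, b). a \<in> H - {m} \<union> (P - {p}) \<and> b \<in> H - {m} \<union> (P - {p}) \<and> a < b}"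
        using arc by auto
    next
      fix r assume r: "r \<in> H - {m} \<union> (P - {p})"
      have r1: "r \<in> H \<union> P" using r by auto
      have r2: "r \<noteq> m" using r Pge[of m] mp by (cases "r \<in> P") auto
      have r3: "r \<noteq> p" using r lt by (cases "r \<in> H") auto
      note r' = r1 r2 r3
      obtain q where q: "matched M r q" using cm_exists[OF cM r'(1)] by auto
      have "q \<noteq> m"
      proof
        assume "q = m" then have "matched M m r" using q by (auto simp: matched_def)
        then show False using um r3 by blast
      qed
      have "q \<noteq> p"
      proof
        assume "q = p" then have "matched M p r" using q by (auto simp: matched_def)
        then show False using up r2 by blast
      qed
      have q': "matched (M - {(m,p)}) r q" using q r' by (auto simp: matched_def)
      show "\<exists>!q. matched (M - {(m, p)}) r q"
        using q' cm_unique[OF cM, of r] by (auto simp: matched_def)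
    qed
    have nc: "noncrossing (M - {(m,p)})" using cM by (auto simp: catalan_matchings_def noncrossing_def)
    show ?thesis unfolding NCext_def catalan_matchings_def using pm nc nh by auto
  qed
  show ?thesis
  proof (intro equalityI subsetI)
    fix M assume "M \<in> {M \<in> NCext P H. (m, p) \<in> M}"
    then have M: "M \<in> NCext P H" "(m,p) \<in> M" by auto
    have "M = insert (m,p) (M - {(m,p)})" using M(2) by auto
    then show "M \<in> insert (m, p) ` NCext (P - {p}) (H - {m})" using bwd[OF M] by blast
  next
    fix M assume "M \<in> insert (m, p) ` NCext (P - {p}) (H - {m})"
    then obtain N where "N \<in> NCext (P - {p}) (H - {m})" "M = insert (m,p) N" by blast
    then show "M \<in> {M \<in> NCext P H. (m, p) \<in> M}" using fwd by blast
  qed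
qed


lemma NCext_finite: "finite P \<Longrightarrow> finite H \<Longrightarrow> finite (NCext P H)"
  by (rule finite_subset[OF _ cm_finite[of "H \<union> P"]]) (auto simp: NCext_def)

lemma NCext_card:
  assumes "finite P" "P \<noteq> {}" "finite H" "\<forall>h\<in>H. h < Min P"
  shows "card (NCext P H) = (if H = {} then 0 else card (NCext (P - {Min P}) (H - {Max H})))
           + card (NCext (P - {Min P}) (insert (Min P) H))"
proof -
  define p where "p = Min P"
  have lt: "\<forall>h\<in>H. h < p" using assms p_def by auto
  have X2: "NCext (P - {p}) (insert p H) = {M \<in> NCext P H. \<forall>h\<in>H. (h,p) \<notin> M}"
    using NCext_X2[OF p_def assms(1,2) lt] .
  show ?thesis
  proof (cases "H = {}")
    case True
    then show ?thesis using X2 p_def by simp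
  next
    case False
    define m where "m = Max H"
    have X1: "{M \<in> NCext P H. (m,p) \<in> M} = insert (m,p) ` NCext (P - {p}) (H - {m})"
      using NCext_X1[OF p_def assms(1,2,3) False lt m_def] .
    have inj: "inj_on (insert (m,p)) (NCext (P - {p}) (H - {m}))"
    proof (rule inj_onI)
      fix A B assume A: "A \<in> NCext (P - {p}) (H - {m})" and B: "B \<in> NCext (P - {p}) (H - {m})"
        and eq: "insert (m,p) A = insert (m,p) B"
      have mH: "m \<in> H" using False m_def assms(3) by auto
      have mP: "m \<notin> P" using lt mH p_def assms(1) by (meson Min_le leD)
      have "(m,p) \<notin> A" "(m,p) \<notin> B" using A B mP by (auto simp: NCext_def dest: cm_arc)
      then show "A = B" using eq by (metis insert_ident)
    qed
    have split: "NCext P H = {M \<in> NCext P H. (m,p) \<in> M} \<union> {M \<in> NCext P H. \<forall>h\<in>H. (h,p) \<notin> M}"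
      using NCext_partner_max[OF _ assms(1,2,3,4)] p_def m_def by blast
    have disj: "{M \<in> NCext P H. (m,p) \<in> M} \<inter> {M \<in> NCext P H. \<forall>h\<in>H. (h,p) \<notin> M} = {}"
      using False m_def assms(3) by (auto intro: Max_in)
    have fin: "finite (NCext P H)" using NCext_finite assms by auto
    have "card (NCext P H) = card {M \<in> NCext P H. (m,p) \<in> M} + card {M \<in> NCext P H. \<forall>h\<in>H. (h,p) \<notin> M}"
      by (subst split, rule card_Un_disjoint) (use fin disj in auto)
    also have "card {M \<in> NCext P H. (m,p) \<in> M} = card (NCext (P - {p}) (H - {m}))"
      unfolding X1 by (rule card_image[OF inj])
    finally show ?thesis using X2 False p_def m_def by simp
  qed
qed

theorem NCext_ballot:
  "finite P \<Longrightarrow> finite H \<Longrightarrow> \<forall>h\<in>H. \<forall>q\<in>P. h < q \<Longrightarrow> card (NCext P H) = ballot (card P) (card H)"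
proof (induction "card P" arbitrary: P H)
  case 0
  then have "P = {}" by auto
  then show ?case using 0 by (auto simp: NCext_empty)
next
  case (Suc u)
  then have Pne: "P \<noteq> {}" by auto
  define p where "p = Min P"
  have pP: "p \<in> P" using Pne Suc.prems p_def by auto
  have lt: "\<forall>h\<in>H. h < Min P" using Suc.prems pP p_def by auto
  have cP: "card (P - {p}) = u" using Suc.hyps pP Suc.prems by auto
  have gt: "\<forall>q\<in>P - {p}. p < q" using p_def Suc.prems(1) pP
    by (metis DiffE Min_le order_le_neq_trans singletonI)
  have IH1: "card (NCext (P - {p}) (insert p H)) = ballot u (card (insert p H))"
    using Suc.hyps(1)[of "P - {p}" "insert p H"] cP Suc.prems gt by auto
  have "p \<notin> H" using lt p_def by auto
  then have ci: "card (insert p H) = Suc (card H)" using Suc.prems by auto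
  show ?case
  proof (cases "H = {}")
    case True
    then show ?thesis using NCext_card[OF Suc.prems(1) Pne Suc.prems(2) lt] IH1 ci Suc.hyps(2)[symmetric]
      by (simp add: p_def)
  next
    case False
    have IH2: "card (NCext (P - {p}) (H - {Max H})) = ballot u (card (H - {Max H}))"
      using Suc.hyps(1)[of "P - {p}" "H - {Max H}"] cP Suc.prems by auto
    have "Max H \<in> H" using False Suc.prems by auto
    then have "card (H - {Max H}) = card H - 1" using Suc.prems by auto
    moreover have "card H > 0" using False Suc.prems by auto
    ultimately show ?thesis using NCext_card[OF Suc.prems(1) Pne Suc.prems(2) lt] IH1 IH2 ci Suc.hyps(2)[symmetric] False
      by (simp add: p_def)
  qed
qed

lemma card_cm_ballot: "finite P \<Longrightarrow> card (catalan_matchings P) = ballot (card P) 0"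
  using NCext_ballot[of P "{}"] by (simp add: NCext_def)

lemma cm_card_upper:
  "finite Q \<Longrightarrow> real (card (catalan_matchings Q)) \<le> 4 ^ (card Q div 2) * (real (card Q div 2) + 1) powr (-3/2)"
proof -
  assume f: "finite Q"
  show ?thesis
  proof (cases "even (card Q)")
    case True
    then have "card Q = 2 * (card Q div 2)" by simp
    then show ?thesis using card_cm_ballot[OF f] cat_upper[of "card Q div 2"] by metis
  next
    case False
    then show ?thesis using card_cm_ballot[OF f] ballot_odd[of "card Q" 0] by simp
  qed
qed

lemma cm_card_lower:
  "finite Q \<Longrightarrow> even (card Q) \<Longrightarrow> 4 ^ (card Q div 2) * (real (card Q div 2) + 1) powr (-3/2) / 2 \<le> real (card (catalan_matchings Q))"
proof -
  assume f: "finite Q" and e: "even (card Q)"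
  then have "card Q = 2 * (card Q div 2)" by simp
  then show ?thesis using card_cm_ballot[OF f] cat_lower[of "card Q div 2"] by metis
qed

fun reg :: "nat \<Rightarrow> nat list \<Rightarrow> nat list \<Rightarrow> nat \<Rightarrow> nat set" where
  "reg N x k 0 = {p \<in> {1..N}. \<forall>i<length x. \<not> (x!i \<le> p \<and> p \<le> x!i + k!i)}"
| "reg N x k (Suc i) = {p. x!i < p \<and> p < x!i + k!i \<and>
        (\<forall>i'<length x. i' \<noteq> i \<and> x!i \<le> x!i' \<and> x!i' + k!i' \<le> x!i + k!i
                \<longrightarrow> \<not> (x!i' \<le> p \<and> p \<le> x!i' + k!i'))}"

definition arcs_in :: "nat list \<Rightarrow> nat list \<Rightarrow> (nat \<times> nat) set \<Rightarrow> bool" where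
  "arcs_in x k M \<longleftrightarrow> (\<forall>i<length x. (x!i, x!i + k!i) \<in> M)"

definition nonend :: "nat list \<Rightarrow> nat list \<Rightarrow> nat \<Rightarrow> bool" where
  "nonend x k p \<longleftrightarrow> (\<forall>j<length x. p \<noteq> x!j \<and> p \<noteq> x!j + k!j)"

lemma matched_sym: "matched M a b \<longleftrightarrow> matched M b a" by (auto simp: matched_def)

lemma same_side0:
  assumes M: "M \<in> catalan_matchings P" and cd: "(c,d) \<in> M" and ab: "(a,b) \<in> M"
    and ne: "a \<noteq> c" "a \<noteq> d" "b \<noteq> c" "b \<noteq> d"
  shows "(c < a \<and> a < d) \<longleftrightarrow> (c < b \<and> b < d)"
proof -
  have cdl: "c < d" using cm_arc[OF M cd] by simp
  have abl: "a < b" using cm_arc[OF M ab] by simp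
  show ?thesis
  proof
    assume h: "c < a \<and> a < d"
    show "c < b \<and> b < d"
    proof (rule ccontr)
      assume "\<not> (c < b \<and> b < d)"
      then have "d < b" using h abl ne by auto
      then show False using cm_nc[OF M cd ab] h by auto
    qed
  next
    assume h: "c < b \<and> b < d"
    show "c < a \<and> a < d"
    proof (rule ccontr)
      assume "\<not> (c < a \<and> a < d)"
      then have "a < c" using h abl ne by auto
      then show False using cm_nc[OF M ab cd] h by auto
    qed
  qed
qed

lemma same_side:
  assumes M: "M \<in> catalan_matchings P" and cd: "(c,d) \<in> M" and ab: "matched M a b"
    and ne: "a \<noteq> c" "a \<noteq> d" "b \<noteq> c" "b \<noteq> d"
  shows "(c < a \<and> a < d) \<longleftrightarrow> (c < b \<and> b < d)"
  using ab same_side0[OF M cd _ ne] same_side0[OF M cd _ ne(3,4,1,2)] unfolding matched_def by blast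


context
  fixes N :: nat and x k :: "nat list" and P :: "nat set" and M :: "(nat \<times> nat) set"
  assumes M: "M \<in> catalan_matchings P" and arcs: "arcs_in x k M" and sx: "sorted_wrt (<) x"
    and lk: "length k = length x" and PN: "P \<subseteq> {1..N}"
begin

lemma arcM: "i < length x \<Longrightarrow> (x!i, x!i + k!i) \<in> M"
  using arcs by (auto simp: arcs_in_def)

lemma arc_lt: "i < length x \<Longrightarrow> x!i < x!i + k!i"
  using cm_arc[OF M arcM] by auto

lemma xinj: "i < length x \<Longrightarrow> j < length x \<Longrightarrow> x!i = x!j \<Longrightarrow> i = j"
  using sorted_wrt_nth_less[OF sx] by (metis less_irrefl nat_neq_iff)

lemma partner_left: "i < length x \<Longrightarrow> matched M (x!i) q \<Longrightarrow> q = x!i + k!i"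
  using cm_unique[OF M] arcM by (auto simp: matched_def)

lemma partner_right: "i < length x \<Longrightarrow> matched M (x!i + k!i) q \<Longrightarrow> q = x!i"
  using cm_unique[OF M] arcM by (auto simp: matched_def)

lemma nonend_partner: "nonend x k r \<Longrightarrow> matched M r q \<Longrightarrow> nonend x k q"
  unfolding nonend_def
proof (intro allI impI conjI)
  fix j assume ne: "\<forall>j<length x. r \<noteq> x ! j \<and> r \<noteq> x ! j + k ! j" and rq: "matched M r q" and j: "j < length x"
  show "q \<noteq> x!j"
  proof
    assume "q = x!j" then have "matched M (x!j) r" using rq matched_sym by metis
    then show False using partner_left[OF j] ne j by auto
  qed
  show "q \<noteq> x!j + k!j"
  proof
    assume "q = x!j + k!j" then have "matched M (x!j + k!j) r" using rq matched_sym by metis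
    then show False using partner_right[OF j] ne j by auto
  qed
qed

lemma ends_distinct:
  assumes i: "i < length x" and j: "j < length x" and ij: "i \<noteq> j"
  shows "x!j \<noteq> x!i" "x!j \<noteq> x!i + k!i" "x!j + k!j \<noteq> x!i" "x!j + k!j \<noteq> x!i + k!i"
proof -
  show "x!j \<noteq> x!i" using xinj i j ij by metis
  show "x!j \<noteq> x!i + k!i"
  proof
    assume e: "x!j = x!i + k!i"
    have "matched M (x!j) (x!j + k!j)" using arcM[OF j] by (auto simp: matched_def)
    then have "x!j + k!j = x!i" using partner_right[OF i] e by auto
    then show False using e arc_lt[OF i] arc_lt[OF j] by auto
  qed
  show "x!j + k!j \<noteq> x!i"
  proof
    assume e: "x!j + k!j = x!i"
    have "matched M (x!i) (x!j)" using arcM[OF j] e by (auto simp: matched_def)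
    then have "x!j = x!i + k!i" using partner_left[OF i] by auto
    then show False using e arc_lt[OF i] arc_lt[OF j] by auto
  qed
  show "x!j + k!j \<noteq> x!i + k!i"
  proof
    assume e: "x!j + k!j = x!i + k!i"
    have "matched M (x!i + k!i) (x!j)" using arcM[OF j] e by (auto simp: matched_def)
    then have "x!j = x!i" using partner_right[OF i] by auto
    then show False using xinj i j ij by metis
  qed
qed

lemma reg_nonend: "i \<le> length x \<Longrightarrow> p \<in> reg N x k i \<Longrightarrow> nonend x k p"
proof (cases i)
  case 0
  assume "p \<in> reg N x k i"
  then show ?thesis using 0 by (auto simp: nonend_def)
next
  case (Suc i0)
  assume il: "i \<le> length x" and p: "p \<in> reg N x k i"
  have i0: "i0 < length x" using il Suc by auto
  have pin: "x!i0 < p" "p < x!i0 + k!i0" using p Suc by auto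
  have nest: "\<And>i'. i' < length x \<Longrightarrow> i' \<noteq> i0 \<Longrightarrow> x!i0 \<le> x!i' \<Longrightarrow> x!i' + k!i' \<le> x!i0 + k!i0
                 \<Longrightarrow> \<not> (x!i' \<le> p \<and> p \<le> x!i' + k!i')"
    using p Suc by auto
  show ?thesis unfolding nonend_def
  proof (intro allI impI conjI notI)
    fix j assume j: "j < length x" and pj: "p = x!j"
    have ji: "i0 \<noteq> j" using pj pin by auto
    have "matched M (x!j) (x!j + k!j)" using arcM[OF j] by (auto simp: matched_def)
    from same_side[OF M arcM[OF i0] this] ends_distinct[OF i0 j ji] pin pj
    have "x!i0 < x!j + k!j" "x!j + k!j < x!i0 + k!i0" by auto
    then show False using nest[OF j ji[symmetric]] pin pj by auto
  next
    fix j assume j: "j < length x" and pj: "p = x!j + k!j"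
    have ji: "i0 \<noteq> j" using pj pin by auto
    have "matched M (x!j + k!j) (x!j)" using arcM[OF j] by (auto simp: matched_def)
    from same_side[OF M arcM[OF i0] this] ends_distinct[OF i0 j ji] pin pj
    have "x!i0 < x!j" "x!j < x!i0 + k!i0" by auto
    then show False using nest[OF j ji[symmetric]] pin pj by auto
  qed
qed

lemma reg_partner:
  assumes ab: "matched M a b" and na: "nonend x k a" and nb: "nonend x k b"
    and il: "i \<le> length x" and a: "a \<in> reg N x k i" and bP: "b \<in> P"
  shows "b \<in> reg N x k i"
proof -
  have ss: "(x!j < a \<and> a < x!j + k!j) \<longleftrightarrow> (x!j < b \<and> b < x!j + k!j)" if j: "j < length x" for j
    using same_side[OF M arcM[OF j] ab] na nb j by (auto simp: nonend_def)
  have cl: "(x!j \<le> b \<and> b \<le> x!j + k!j) \<longleftrightarrow> (x!j < b \<and> b < x!j + k!j)" if j: "j < length x" for j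
    using nb j by (auto simp: nonend_def)
  have cla: "(x!j \<le> a \<and> a \<le> x!j + k!j) \<longleftrightarrow> (x!j < a \<and> a < x!j + k!j)" if j: "j < length x" for j
    using na j by (auto simp: nonend_def)
  show ?thesis
  proof (cases i)
    case 0
    have "\<not> (x!j \<le> b \<and> b \<le> x!j + k!j)" if j: "j < length x" for j
    proof
      assume "x!j \<le> b \<and> b \<le> x!j + k!j"
      then have "x!j < a \<and> a < x!j + k!j" using cl[OF j] ss[OF j] by blast
      moreover have "\<not> (x!j \<le> a \<and> a \<le> x!j + k!j)" using a 0 j by auto
      ultimately show False by auto
    qed
    then show ?thesis using bP PN 0 by auto
  next
    case (Suc i0)
    then have i0: "i0 < length x" using il by auto
    show ?thesis using a Suc ss[OF i0] ss cl cla by auto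
  qed
qed

lemma reg_cover:
  assumes pP: "p \<in> P" and np: "nonend x k p"
  shows "\<exists>i\<le>length x. p \<in> reg N x k i"
proof (cases "\<forall>i<length x. \<not> (x!i \<le> p \<and> p \<le> x!i + k!i)")
  case True
  then have "p \<in> reg N x k 0" using pP PN by auto
  then show ?thesis by blast
next
  case False
  define J where "J = {i. i < length x \<and> x!i < p \<and> p < x!i + k!i}"
  have strict: "i < length x \<Longrightarrow> x!i \<le> p \<Longrightarrow> p \<le> x!i + k!i \<Longrightarrow> i \<in> J" for i
    using np unfolding J_def nonend_def by force
  have Jne: "J \<noteq> {}" using False strict by blast
  have Jf: "finite J" unfolding J_def by auto
  obtain i where iJ: "i \<in> J" and imin: "\<forall>j\<in>J. k!i \<le> k!j"
  proof -
    let ?m = "Min ((\<lambda>j. k!j) ` J)"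
    have "?m \<in> (\<lambda>j. k!j) ` J" using Jne Jf by auto
    then obtain i where "i \<in> J" "k!i = ?m" by auto
    moreover have "\<forall>j\<in>J. ?m \<le> k!j" using Jf by auto
    ultimately show ?thesis using that by auto
  qed
  have i: "i < length x" using iJ J_def by auto
  have "p \<in> reg N x k (Suc i)"
  proof -
    have "\<not> (x!i' \<le> p \<and> p \<le> x!i' + k!i')"
      if i': "i' < length x" "i' \<noteq> i" "x!i \<le> x!i'" "x!i' + k!i' \<le> x!i + k!i" for i'
    proof
      assume "x!i' \<le> p \<and> p \<le> x!i' + k!i'"
      then have "i' \<in> J" using strict i' by auto
      then have "k!i \<le> k!i'" using imin by auto
      then have "x!i' = x!i" using i' by auto
      then show False using xinj i i' by metis
    qed
    then show ?thesis using iJ J_def by auto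
  qed
  then show ?thesis using i by (intro exI[of _ "Suc i"]) auto
qed

lemma reg_disj:
  assumes il: "i \<le> length x" and jl: "j \<le> length x" and ij: "i \<noteq> j"
  shows "reg N x k i \<inter> reg N x k j = {}"
proof -
  have main: "reg N x k (Suc a) \<inter> reg N x k (Suc b) = {}"
    if a: "a < length x" and b: "b < length x" and ab: "a \<noteq> b" and lt: "x!a < x!b" for a b
  proof (rule ccontr)
    assume "reg N x k (Suc a) \<inter> reg N x k (Suc b) \<noteq> {}"
    then obtain p where pa: "p \<in> reg N x k (Suc a)" and pb: "p \<in> reg N x k (Suc b)" by blast
    have p1: "x!b < p" "p < x!a + k!a" using pa pb by auto
    show False
    proof (cases "x!b + k!b \<le> x!a + k!a")
      case True
      then show False using pa pb b ab lt by auto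
    next
      case False
      then show False using cm_nc[OF M arcM[OF a] arcM[OF b]] lt p1 by auto
    qed
  qed
  show ?thesis
  proof (cases "i = 0 \<or> j = 0")
    case True
    have z: "reg N x k 0 \<inter> reg N x k (Suc b) = {}" if b: "b < length x" for b
    proof -
      { fix p assume p0: "p \<in> reg N x k 0" and ps: "p \<in> reg N x k (Suc b)"
        have "\<not> (x!b \<le> p \<and> p \<le> x!b + k!b)" using p0 b by auto
        then have False using ps by auto }
      then show ?thesis by blast
    qed
    show ?thesis
    proof (cases "i = 0")
      case True
      then obtain b where "j = Suc b" using ij by (cases j) auto
      then show ?thesis using z[of b] True jl by auto
    next
      case False
      then have "j = 0" using \<open>i = 0 \<or> j = 0\<close> by auto
      obtain b where "i = Suc b" using False by (cases i) auto
      then show ?thesis using z[of b] \<open>j = 0\<close> il by auto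
    qed
  next
    case False
    then obtain a b where ia: "i = Suc a" and jb: "j = Suc b" by (meson not0_implies_Suc)
    have a: "a < length x" and b: "b < length x" using il jl ia jb by auto
    have ab: "a \<noteq> b" using ij ia jb by auto
    have "x!a \<noteq> x!b" using xinj a b ab by metis
    then show ?thesis using main[OF a b ab] main[OF b a ab[symmetric]] ia jb
      by (cases "x!a < x!b") (auto simp: Int_commute)
  qed
qed

lemma reg_restrict:
  assumes il: "i \<le> length x"
  shows "M \<inter> ((P \<inter> reg N x k i) \<times> (P \<inter> reg N x k i)) \<in> catalan_matchings (P \<inter> reg N x k i)"
proof -
  let ?Q = "P \<inter> reg N x k i"
  let ?M = "M \<inter> (?Q \<times> ?Q)"
  have pm: "perfect_matching_on ?Q ?M"
    unfolding perfect_matching_on_def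
  proof (intro conjI ballI)
    show "?M \<subseteq> {(a, b). a \<in> ?Q \<and> b \<in> ?Q \<and> a < b}" using cm_arc[OF M] by auto
  next
    fix r assume r: "r \<in> ?Q"
    obtain q where q: "matched M r q" using cm_exists[OF M] r by blast
    have nr: "nonend x k r" using reg_nonend[OF il] r by auto
    have nq: "nonend x k q" using nonend_partner[OF nr q] .
    have qP: "q \<in> P" using q cm_arc[OF M] by (auto simp: matched_def)
    have "q \<in> reg N x k i" using reg_partner[OF q nr nq il _ qP] r by auto
    then have q': "matched ?M r q" using q qP r by (auto simp: matched_def)
    show "\<exists>!q. matched ?M r q"
      using q' cm_unique[OF M, of r] by (auto simp: matched_def)
  qed
  have "noncrossing ?M" using M by (auto simp: catalan_matchings_def noncrossing_def)
  then show ?thesis using pm by (simp add: catalan_matchings_def)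
qed

end

lemma reg_inj_sub:
  assumes M1: "M1 \<in> catalan_matchings P" and a1: "arcs_in x k M1"
    and M2: "M2 \<in> catalan_matchings P" and a2: "arcs_in x k M2"
    and sx: "sorted_wrt (<) x" and lk: "length k = length x" and PN: "P \<subseteq> {1..N}"
    and eq: "\<forall>i\<le>length x. Restr M1 (P \<inter> reg N x k i) = Restr M2 (P \<inter> reg N x k i)"
  shows "M1 \<subseteq> M2"
proof
  fix ab assume ab: "ab \<in> M1"
  obtain a b where abe: "ab = (a,b)" by (cases ab)
  have abM: "(a,b) \<in> M1" using ab abe by simp
  have aP: "a \<in> P" and bP: "b \<in> P" and lt: "a < b" using cm_arc[OF M1 abM] by auto
  have mab: "matched M1 a b" using abM by (simp add: matched_def)
  show "ab \<in> M2"
  proof (cases "nonend x k a")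
    case True
    have nb: "nonend x k b" using nonend_partner[OF M1 a1 sx lk PN True mab] .
    obtain i where il: "i \<le> length x" and ai: "a \<in> reg N x k i"
      using reg_cover[OF M1 a1 sx lk PN aP True] by auto
    have bi: "b \<in> reg N x k i" using reg_partner[OF M1 a1 sx lk PN mab True nb il ai bP] .
    have "(a,b) \<in> Restr M1 (P \<inter> reg N x k i)" using abM aP bP ai bi by auto
    then have "(a,b) \<in> Restr M2 (P \<inter> reg N x k i)" using eq il by auto
    then show ?thesis using abe by auto
  next
    case False
    then obtain j where j: "j < length x" and aj: "a = x!j \<or> a = x!j + k!j"
      unfolding nonend_def by auto
    show ?thesis
    proof (cases "a = x!j")
      case True
      then have "b = x!j + k!j" using partner_left[OF M1 a1 sx lk PN j] mab by auto
      then show ?thesis using True arcM[OF M2 a2 sx lk PN j] abe by auto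
    next
      case False
      then have "a = x!j + k!j" using aj by auto
      then have "b = x!j" using partner_right[OF M1 a1 sx lk PN j] mab by auto
      then show ?thesis using \<open>a = x!j + k!j\<close> lt by auto
    qed
  qed
qed

lemma count_bound:
  assumes fP: "finite P" and sx: "sorted_wrt (<) x" and lk: "length k = length x" and PN: "P \<subseteq> {1..N}"
  shows "card {M \<in> catalan_matchings P. arcs_in x k M}
           \<le> (\<Prod>i\<in>{0..length x}. card (catalan_matchings (P \<inter> reg N x k i)))"
proof -
  let ?S = "{M \<in> catalan_matchings P. arcs_in x k M}"
  let ?B = "PiE {0..length x} (\<lambda>i. catalan_matchings (P \<inter> reg N x k i))"
  define f where "f M = restrict (\<lambda>i. Restr M (P \<inter> reg N x k i)) {0..length x}" for M
  have img: "f ` ?S \<subseteq> ?B"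
  proof
    fix F assume "F \<in> f ` ?S"
    then obtain M where M: "M \<in> catalan_matchings P" "arcs_in x k M" and F: "F = f M" by auto
    show "F \<in> ?B" unfolding F f_def
      using reg_restrict[OF M sx lk PN] by auto
  qed
  have inj: "inj_on f ?S"
  proof (rule inj_onI)
    fix M1 M2 assume M1: "M1 \<in> ?S" and M2: "M2 \<in> ?S" and e: "f M1 = f M2"
    have eq: "\<forall>i\<le>length x. Restr M1 (P \<inter> reg N x k i) = Restr M2 (P \<inter> reg N x k i)"
    proof (intro allI impI)
      fix i assume "i \<le> length x"
      then have "f M1 i = Restr M1 (P \<inter> reg N x k i)" "f M2 i = Restr M2 (P \<inter> reg N x k i)"
        unfolding f_def by auto
      then show "Restr M1 (P \<inter> reg N x k i) = Restr M2 (P \<inter> reg N x k i)" using e by simp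
    qed
    have "M1 \<subseteq> M2" using reg_inj_sub[OF _ _ _ _ sx lk PN eq] M1 M2 by auto
    moreover have "M2 \<subseteq> M1" using reg_inj_sub[OF _ _ _ _ sx lk PN] eq M1 M2 by auto
    ultimately show "M1 = M2" by auto
  qed
  have finB: "finite ?B" by (rule finite_PiE) (auto intro: cm_finite fP)
  have "card ?S \<le> card ?B" by (rule card_inj_on_le[OF inj img finB])
  also have "card ?B = (\<Prod>i\<in>{0..length x}. card (catalan_matchings (P \<inter> reg N x k i)))"
    by (rule card_PiE) simp
  finally show ?thesis .
qed

lemma sum_reg_bound:
  assumes fP: "finite P" and M: "M \<in> catalan_matchings P" and a: "arcs_in x k M"
    and sx: "sorted_wrt (<) x" and lk: "length k = length x" and PN: "P \<subseteq> {1..N}"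
  shows "(\<Sum>i\<in>{0..length x}. card (P \<inter> reg N x k i)) \<le> card P"
proof -
  have "(\<Sum>i\<in>{0..length x}. card (P \<inter> reg N x k i)) = card (\<Union>i\<in>{0..length x}. P \<inter> reg N x k i)"
  proof (rule card_UN_disjoint[symmetric])
    show "finite {0..length x}" by simp
    show "\<forall>i\<in>{0..length x}. finite (P \<inter> reg N x k i)" using fP by auto
    show "\<forall>i\<in>{0..length x}. \<forall>j\<in>{0..length x}. i \<noteq> j \<longrightarrow> (P \<inter> reg N x k i) \<inter> (P \<inter> reg N x k j) = {}"
      using reg_disj[OF M a sx lk PN] by (metis (no_types, lifting) Int_assoc Int_commute Int_empty_right atLeastAtMost_iff inf_left_commute)
  qed
  also have "\<dots> \<le> card P" by (rule card_mono[OF fP]) auto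
  finally show ?thesis .
qed

lemma ratio_bound:
  assumes fP: "finite P" and sx: "sorted_wrt (<) x" and lk: "length k = length x" and PN: "P \<subseteq> {1..N}"
    and ev: "even (card P)"
  shows "real (card {M \<in> catalan_matchings P. arcs_in x k M}) / real (card (catalan_matchings P))
     \<le> 2 * (real (card P div 2) + 1) powr (3/2) *
        (\<Prod>i\<in>{0..length x}. (real (card (P \<inter> reg N x k i) div 2) + 1) powr (-3/2))"
    (is "?L \<le> 2 * ?A * ?W")
proof (cases "{M \<in> catalan_matchings P. arcs_in x k M} = {}")
  case True
  have z: "?L = 0" by (simp only: True card.empty of_nat_0 div_0)
  have "0 \<le> 2 * ?A * ?W" by (simp add: prod_nonneg)
  then show ?thesis using z by linarith
next
  case False
  then obtain M0 where M0: "M0 \<in> catalan_matchings P" "arcs_in x k M0" by auto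
  define q where "q i = card (P \<inter> reg N x k i)" for i
  define w where "w i = (real (q i div 2) + 1) powr (-3/2)" for i
  define m2 where "m2 = card P div 2"
  define D where "D = (\<Sum>i\<in>{0..length x}. q i div 2)"
  have W: "?W = (\<Prod>i\<in>{0..length x}. w i)" unfolding w_def q_def by simp
  have sq: "(\<Sum>i\<in>{0..length x}. q i) \<le> card P"
    unfolding q_def using sum_reg_bound[OF fP M0 sx lk PN] .
  have "2 * D \<le> (\<Sum>i\<in>{0..length x}. q i)"
    unfolding D_def sum_distrib_left by (rule sum_mono) simp
  then have "2 * D \<le> card P" using sq by linarith
  then have "(2 * D) div 2 \<le> card P div 2" by (rule div_le_mono)
  then have Dm: "D \<le> m2" unfolding m2_def by simp
  have "real (card {M \<in> catalan_matchings P. arcs_in x k M}) \<le> (\<Prod>i\<in>{0..length x}. real (card (catalan_matchings (P \<inter> reg N x k i))))"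
    unfolding of_nat_prod[symmetric] of_nat_le_iff by (rule count_bound[OF fP sx lk PN])
  also have "\<dots> \<le> (\<Prod>i\<in>{0..length x}. 4 ^ (q i div 2) * w i)"
  proof (rule prod_mono)
    fix i assume i: "i \<in> {0..length x}"
    have f: "finite (P \<inter> reg N x k i)" using fP by auto
    show "0 \<le> real (card (catalan_matchings (P \<inter> reg N x k i))) \<and>
          real (card (catalan_matchings (P \<inter> reg N x k i))) \<le> 4 ^ (q i div 2) * w i"
      using cm_card_upper[OF f] unfolding q_def w_def by simp
  qed
  also have "\<dots> = 4 ^ D * (\<Prod>i\<in>{0..length x}. w i)"
    by (simp add: prod.distrib D_def power_sum)
  finally have num: "real (card {M \<in> catalan_matchings P. arcs_in x k M}) \<le> 4 ^ D * (\<Prod>i\<in>{0..length x}. w i)" .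
  define a where "a = (real m2 + 1) powr (3/2)"
  have apos: "a > 0" unfolding a_def by simp
  have ainv: "(real m2 + 1) powr (-3/2) = 1 / a" unfolding a_def by (simp add: powr_minus_divide)
  have den: "4 ^ m2 * (1 / a) / 2 \<le> real (card (catalan_matchings P))"
    using cm_card_lower[OF fP ev] unfolding m2_def[symmetric] ainv .
  have Lpos: "4 ^ m2 * (1 / a) / 2 > 0" using apos by simp
  have Wnn: "(\<Prod>i\<in>{0..length x}. w i) \<ge> 0" unfolding w_def by (simp add: prod_nonneg)
  have "?L \<le> 4 ^ D * (\<Prod>i\<in>{0..length x}. w i) / (4 ^ m2 * (1 / a) / 2)"
    by (rule frac_le[OF _ num Lpos den]) (simp add: Wnn)
  also have "\<dots> = 2 * (4 ^ D / 4 ^ m2) * a * (\<Prod>i\<in>{0..length x}. w i)"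
    using apos by (simp add: field_simps)
  also have "\<dots> \<le> 2 * 1 * a * (\<Prod>i\<in>{0..length x}. w i)"
  proof -
    have "(4::real) ^ D \<le> 4 ^ m2" using Dm by (rule power_increasing) simp
    then have "(4::real) ^ D / 4 ^ m2 \<le> 1" by simp
    then show ?thesis using Wnn apos by (intro mult_right_mono mult_left_mono) auto
  qed
  finally show ?thesis using W m2_def a_def by simp
qed

lemma measure_bind_pmf':
  "measure_pmf.prob (bind_pmf M f) X = (\<integral>x. measure_pmf.prob (f x) X \<partial>measure_pmf M)"
  by (simp add: measure_pmf_bind measure_pmf.measure_bind[where N="count_space UNIV"] measure_subprob)

lemma integral_pmf_of_set_if:
  assumes "finite S" "S \<noteq> {}"
  shows "(\<integral>z. (if z \<in> X then c else 0) \<partial>measure_pmf (pmf_of_set S)) = real (card (S \<inter> X)) * c / real (card S)"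
proof -
  have "(\<integral>z. (if z \<in> X then c else 0) \<partial>measure_pmf (pmf_of_set S)) = (\<Sum>z\<in>S. if z \<in> X then c else 0) / real (card S)"
    using assms by (simp add: integral_pmf_of_set)
  also have "(\<Sum>z\<in>S. if z \<in> X then c else 0) = (\<Sum>z\<in>S \<inter> X. c)"
    using sum.inter_restrict[OF assms(1), of "\<lambda>_. c" X] by simp
  also have "\<dots> = real (card (S \<inter> X)) * c" by simp
  finally show ?thesis .
qed

lemma inner_prob:
  assumes fR: "finite SR" "SR \<noteq> {}" and fB: "finite SB" "SB \<noteq> {}"
  shows "measure_pmf.prob (pmf_of_set SR \<bind> (\<lambda>Mr. pmf_of_set SB \<bind> (\<lambda>Mb. return_pmf (R, Mr, Mb))))
           {(R', Mr, Mb). Mr \<in> X \<and> Mb \<in> Y}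
         = real (card (SR \<inter> X)) / real (card SR) * (real (card (SB \<inter> Y)) / real (card SB))"
proof -
  have in1: "measure_pmf.prob (pmf_of_set SB \<bind> (\<lambda>Mb. return_pmf (R, Mr, Mb))) {(R', Mr, Mb). Mr \<in> X \<and> Mb \<in> Y}
      = (if Mr \<in> X then real (card (SB \<inter> Y)) / real (card SB) else 0)" for Mr
  proof -
    have "measure_pmf.prob (pmf_of_set SB \<bind> (\<lambda>Mb. return_pmf (R, Mr, Mb))) {(R', Mr, Mb). Mr \<in> X \<and> Mb \<in> Y}
        = (\<integral>Mb. (if Mb \<in> Y then (if Mr \<in> X then 1 else 0) else 0) \<partial>measure_pmf (pmf_of_set SB))"
      unfolding measure_bind_pmf' measure_return_pmf by (rule Bochner_Integration.integral_cong) (auto simp: indicator_def)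
    also have "\<dots> = real (card (SB \<inter> Y)) * (if Mr \<in> X then 1 else 0) / real (card SB)"
      by (rule integral_pmf_of_set_if[OF fB])
    finally show ?thesis by simp
  qed
  have "measure_pmf.prob (pmf_of_set SR \<bind> (\<lambda>Mr. pmf_of_set SB \<bind> (\<lambda>Mb. return_pmf (R, Mr, Mb))))
           {(R', Mr, Mb). Mr \<in> X \<and> Mb \<in> Y}
      = (\<integral>Mr. (if Mr \<in> X then real (card (SB \<inter> Y)) / real (card SB) else 0) \<partial>measure_pmf (pmf_of_set SR))"
    unfolding measure_bind_pmf'[of "pmf_of_set SR"] in1 ..
  also have "\<dots> = real (card (SR \<inter> X)) * (real (card (SB \<inter> Y)) / real (card SB)) / real (card SR)"
    by (rule integral_pmf_of_set_if[OF fR])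
  finally show ?thesis by simp
qed

definition ratio :: "nat set \<Rightarrow> nat list \<Rightarrow> nat list \<Rightarrow> real" where
  "ratio P x k = real (card {M \<in> catalan_matchings P. arcs_in x k M}) / real (card (catalan_matchings P))"

lemma cm_nonempty: "finite P \<Longrightarrow> even (card P) \<Longrightarrow> catalan_matchings P \<noteq> {}"
proof
  assume f: "finite P" and e: "even (card P)" and c: "catalan_matchings P = {}"
  have "4 ^ (card P div 2) * (real (card P div 2) + 1) powr (-3/2) / 2 \<le> real (card (catalan_matchings P))"
    by (rule cm_card_lower[OF f e])
  moreover have "0 < 4 ^ (card P div 2) * (real (card P div 2) + 1) powr (-3/2) / (2::real)" by simp
  moreover have "real (card (catalan_matchings P)) = 0" using c by simp
  ultimately show False by linarith
qed

definition Rf :: "nat \<Rightarrow> nat set \<Rightarrow> nat set" where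
  "Rf n C = (if even (card C) then C else insert (2*n) C)"

lemma Rf_props:
  assumes C: "C \<subseteq> {1..<2*n}"
  shows "Rf n C \<subseteq> {1..2*n}" "even (card (Rf n C))" "finite (Rf n C)"
    "even (card ({1..2*n} - Rf n C))" "C \<subseteq> Rf n C" "Rf n C \<inter> {1..<2*n} = C"
proof -
  have fC: "finite C" using C finite_subset by blast
  have n2: "2*n \<notin> C" using C by auto
  show sub: "Rf n C \<subseteq> {1..2*n}"
  proof (cases "even (card C)")
    case True then show ?thesis using C by (auto simp: Rf_def)
  next
    case False
    then have "C \<noteq> {}" by auto
    then have "n \<ge> 1" using C by auto
    then show ?thesis using C False by (auto simp: Rf_def)
  qed
  show ev: "even (card (Rf n C))" using fC n2 by (auto simp: Rf_def)
  show "finite (Rf n C)" using fC by (auto simp: Rf_def)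
  have "card ({1..2*n} - Rf n C) = 2*n - card (Rf n C)"
    using sub by (simp add: card_Diff_subset finite_subset)
  moreover have "card (Rf n C) \<le> 2*n" using sub card_mono[of "{1..2*n}"] by fastforce
  ultimately show "even (card ({1..2*n} - Rf n C))" using ev by auto
  show "C \<subseteq> Rf n C" by (auto simp: Rf_def)
  show "Rf n C \<inter> {1..<2*n} = C" using C by (auto simp: Rf_def)
qed

lemma CP_bound:
  "measure_pmf.prob (CP n) (event_A n x k y l)
    \<le> (\<Sum>C\<in>Pow {1..<2*n}. ratio (Rf n C) x k * ratio ({1..2*n} - Rf n C) y l) / real (card (Pow {1..<2*n}))"
proof -
  define E where "E = {(R'::nat set, Mr, Mb). Mr \<in> {M. arcs_in x k M} \<and> Mb \<in> {M. arcs_in y l M}}"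
  have e1: "{M \<in> catalan_matchings P. arcs_in x k M} = catalan_matchings P \<inter> {M. arcs_in x k M}" for P by auto
  have e2: "{M \<in> catalan_matchings P. arcs_in y l M} = catalan_matchings P \<inter> {M. arcs_in y l M}" for P by auto
  have sub: "event_A n x k y l \<subseteq> E" unfolding event_A_def E_def arcs_in_def by auto
  have "measure_pmf.prob (CP n) (event_A n x k y l) \<le> measure_pmf.prob (CP n) E"
    by (rule measure_pmf.finite_measure_mono[OF sub]) simp
  also have "measure_pmf.prob (CP n) E
      = (\<Sum>C\<in>Pow {1..<2*n}. measure_pmf.prob (let R = if even (card C) then C else insert (2 * n) C
                in pmf_of_set (catalan_matchings R) \<bind> (\<lambda>Mr. pmf_of_set (catalan_matchings ({1..2 * n} - R)) \<bind> (\<lambda>Mb. return_pmf (R, Mr, Mb)))) E) / real (card (Pow {1..<2*n}))"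
    unfolding CP_def measure_bind_pmf'[of "pmf_of_set (Pow {1..<2*n})"]
    by (rule integral_pmf_of_set) auto
  also have "\<dots> = (\<Sum>C\<in>Pow {1..<2*n}. ratio (Rf n C) x k * ratio ({1..2*n} - Rf n C) y l) / real (card (Pow {1..<2*n}))"
  proof (rule arg_cong[where f = "\<lambda>z. z / real (card (Pow {1..<2*n}))"], rule sum.cong[OF refl])
    fix C assume "C \<in> Pow {1..<2*n}"
    then have C: "C \<subseteq> {1..<2*n}" by auto
    note rp = Rf_props[OF C]
    have fB: "finite ({1..2*n} - Rf n C)" by simp
    show "measure_pmf.prob (let R = if even (card C) then C else insert (2 * n) C
              in pmf_of_set (catalan_matchings R) \<bind> (\<lambda>Mr. pmf_of_set (catalan_matchings ({1..2 * n} - R)) \<bind> (\<lambda>Mb. return_pmf (R, Mr, Mb)))) E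
      = ratio (Rf n C) x k * ratio ({1..2*n} - Rf n C) y l"
      unfolding Rf_def[symmetric] Let_def E_def ratio_def e1 e2
      by (rule inner_prob[OF cm_finite[OF rp(3)] cm_nonempty[OF rp(3) rp(2)] cm_finite[OF fB] cm_nonempty[OF fB rp(4)]])
  qed
  finally show ?thesis .
qed

lemma sum_pow_card_Int:
  fixes \<theta> :: real
  assumes "finite U"
  shows "(\<Sum>C\<in>Pow U. \<theta> ^ card (C \<inter> F)) = (1 + \<theta>) ^ card (U \<inter> F) * 2 ^ card (U - F)"
  using assms
proof (induction U rule: finite_induct)
  case empty then show ?case by simp
next
  case (insert u U)
  have inj: "inj_on (insert u) (Pow U)" using insert.hyps(2)
    by (intro inj_onI) (metis Pow_iff insert_ident subsetD)
  have disj: "Pow U \<inter> insert u ` Pow U = {}" using insert.hyps(2) by auto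
  have fin: "finite (Pow U)" "finite (insert u ` Pow U)" using insert.hyps(1) by auto
  have "(\<Sum>C\<in>Pow (insert u U). \<theta> ^ card (C \<inter> F))
      = (\<Sum>C\<in>Pow U. \<theta> ^ card (C \<inter> F)) + (\<Sum>C\<in>insert u ` Pow U. \<theta> ^ card (C \<inter> F))"
    unfolding Pow_insert by (rule sum.union_disjoint[OF fin disj])
  also have "(\<Sum>C\<in>insert u ` Pow U. \<theta> ^ card (C \<inter> F)) = (\<Sum>C\<in>Pow U. \<theta> ^ card (insert u C \<inter> F))"
    by (rule sum.reindex[OF inj, unfolded comp_def])
  also have "\<dots> = (\<Sum>C\<in>Pow U. (if u \<in> F then \<theta> else 1) * \<theta> ^ card (C \<inter> F))"
  proof (rule sum.cong[OF refl])
    fix C assume "C \<in> Pow U"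
    then have uC: "u \<notin> C" using insert.hyps(2) by auto
    have fC: "finite (C \<inter> F)" using \<open>C \<in> Pow U\<close> insert.hyps(1) finite_subset by auto
    show "\<theta> ^ card (insert u C \<inter> F) = (if u \<in> F then \<theta> else 1) * \<theta> ^ card (C \<inter> F)"
      using uC fC by (cases "u \<in> F") auto
  qed
  also have "\<dots> = (if u \<in> F then \<theta> else 1) * (\<Sum>C\<in>Pow U. \<theta> ^ card (C \<inter> F))"
    by (simp add: sum_distrib_left)
  finally have e: "(\<Sum>C\<in>Pow (insert u U). \<theta> ^ card (C \<inter> F)) = (1 + (if u \<in> F then \<theta> else 1)) * (\<Sum>C\<in>Pow U. \<theta> ^ card (C \<inter> F))"
    by (simp add: algebra_simps)
  show ?case
  proof (cases "u \<in> F")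
    case True
    have "card (insert u U \<inter> F) = Suc (card (U \<inter> F))" using True insert by auto
    moreover have "insert u U - F = U - F" using True by auto
    ultimately show ?thesis using e insert.IH True by simp
  next
    case False
    have "insert u U \<inter> F = U \<inter> F" using False by auto
    moreover have "card (insert u U - F) = Suc (card (U - F))"
    proof -
      have "insert u U - F = insert u (U - F)" using False by auto
      then show ?thesis using insert.hyps by simp
    qed
    ultimately show ?thesis using e insert.IH False by simp
  qed
qed

lemma bad_count:
  fixes f :: real
  assumes fU: "finite U"
  shows "real (card {C \<in> Pow U. 16 * real (card (C \<inter> F)) < f}) / 2 ^ card U
           \<le> 2 powr (f / 16) * (3/4) ^ card (U \<inter> F)"
proof -
  let ?B = "{C \<in> Pow U. 16 * real (card (C \<inter> F)) < f}"
  have one: "1 \<le> (1/2) ^ card (C \<inter> F) * 2 powr (f / 16)" if C: "C \<in> ?B" for C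
  proof -
    have "real (card (C \<inter> F)) < f / 16" using C by auto
    then have "2 powr real (card (C \<inter> F)) \<le> 2 powr (f / 16)" by (intro powr_mono) auto
    then have "2 ^ card (C \<inter> F) \<le> 2 powr (f / 16)" by (simp add: powr_realpow)
    then show ?thesis by (simp add: power_one_over field_simps)
  qed
  have "real (card ?B) = (\<Sum>C\<in>?B. 1)" by simp
  also have "\<dots> \<le> (\<Sum>C\<in>?B. (1/2) ^ card (C \<inter> F) * 2 powr (f / 16))"
    by (rule sum_mono[OF one])
  also have "\<dots> \<le> (\<Sum>C\<in>Pow U. (1/2) ^ card (C \<inter> F) * 2 powr (f / 16))"
    by (rule sum_mono2) (use fU in auto)
  also have "\<dots> = 2 powr (f / 16) * ((3/2) ^ card (U \<inter> F) * 2 ^ card (U - F))"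
    using sum_pow_card_Int[OF fU, of "1/2" F] by (simp add: sum_distrib_right[symmetric] mult.commute)
  finally have b: "real (card ?B) \<le> 2 powr (f / 16) * ((3/2) ^ card (U \<inter> F) * 2 ^ card (U - F))" .
  have cu: "card U = card (U \<inter> F) + card (U - F)"
  proof -
    have "U = (U \<inter> F) \<union> (U - F)" by auto
    then have "card U = card ((U \<inter> F) \<union> (U - F))" by simp
    also have "\<dots> = card (U \<inter> F) + card (U - F)" by (rule card_Un_disjoint) (use fU in auto)
    finally show ?thesis .
  qed
  have "2 powr (f / 16) * ((3/2) ^ card (U \<inter> F) * 2 ^ card (U - F)) / 2 ^ card U
      = 2 powr (f / 16) * ((3/2) ^ card (U \<inter> F) / 2 ^ card (U \<inter> F))"
    unfolding cu by (simp add: power_add)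
  also have "\<dots> = 2 powr (f / 16) * (3/4) ^ card (U \<inter> F)"
  proof -
    have "(3/2::real) ^ card (U \<inter> F) / 2 ^ card (U \<inter> F) = ((3/2) / 2) ^ card (U \<inter> F)"
      by (rule power_divide[symmetric])
    also have "(3/2::real) / 2 = 3/4" by simp
    finally show ?thesis by simp
  qed
  finally have e: "2 powr (f / 16) * ((3/2) ^ card (U \<inter> F) * 2 ^ card (U - F)) / 2 ^ card U = 2 powr (f / 16) * (3/4) ^ card (U \<inter> F)" .
  have "real (card ?B) / 2 ^ card U \<le> 2 powr (f / 16) * ((3/2) ^ card (U \<inter> F) * 2 ^ card (U - F)) / 2 ^ card U"
    by (rule divide_right_mono[OF b]) simp
  then show ?thesis unfolding e .
qed

lemma bad_count_compl:
  assumes fU: "finite U"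
  shows "card {C \<in> Pow U. P (U - C)} = card {C \<in> Pow U. P C}"
proof -
  have "{C \<in> Pow U. P (U - C)} = (\<lambda>D. U - D) ` {C \<in> Pow U. P C}"
  proof (intro equalityI subsetI)
    fix C assume "C \<in> {C \<in> Pow U. P (U - C)}"
    then show "C \<in> (\<lambda>D. U - D) ` {C \<in> Pow U. P C}"
      by (intro image_eqI[of _ _ "U - C"]) auto
  next
    fix C assume "C \<in> (\<lambda>D. U - D) ` {C \<in> Pow U. P C}"
    then obtain D where D: "D \<subseteq> U" "P D" "C = U - D" by auto
    have "U - (U - D) = D" using D(1) by auto
    then show "C \<in> {C \<in> Pow U. P (U - C)}" using D by auto
  qed
  moreover have "inj_on (\<lambda>D. U - D) {C \<in> Pow U. P C}"
    by (intro inj_onI) auto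
  ultimately show ?thesis by (simp add: card_image)
qed

fun freeset :: "nat \<Rightarrow> nat list \<Rightarrow> nat list \<Rightarrow> nat list \<Rightarrow> nat list \<Rightarrow> nat \<Rightarrow> nat set" where
  "freeset n x k y l 0 =
     {p \<in> {1..2*n}. (\<forall>i<length x. \<not> (x!i \<le> p \<and> p \<le> x!i + k!i)) \<and>
                         (\<forall>j<length y. p \<noteq> y!j \<and> p \<noteq> y!j + l!j)}"
| "freeset n x k y l (Suc i) =
     {p. x!i < p \<and> p < x!i + k!i \<and>
        (\<forall>i'<length x. i' \<noteq> i \<and> x!i \<le> x!i' \<and> x!i' + k!i' \<le> x!i + k!i
                \<longrightarrow> \<not> (x!i' \<le> p \<and> p \<le> x!i' + k!i')) \<and>
        (\<forall>j<length y. p \<noteq> y!j \<and> p \<noteq> y!j + l!j)}"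

lemma free_count_card: "free_count n x k y l i = card (freeset n x k y l i)"
  by (cases i) simp_all

lemma freeset_reg: "freeset n x k y l i \<subseteq> reg (2*n) x k i"
  by (cases i) auto

lemma freeset_sub:
  assumes "\<forall>i<length x. x!i + k!i \<le> 2*n" and "i \<le> length x"
  shows "freeset n x k y l i \<subseteq> {1..2*n}"
proof (cases i)
  case 0 then show ?thesis by auto
next
  case (Suc i0)
  then have "i0 < length x" using assms by auto
  then have "x!i0 + k!i0 \<le> 2*n" using assms by auto
  then show ?thesis using Suc by auto
qed

lemma prod_le_subset_le1:
  fixes w :: "nat \<Rightarrow> real"
  assumes "finite A" "S \<subseteq> A" "\<forall>i\<in>A. 0 \<le> w i \<and> w i \<le> 1"
  shows "(\<Prod>i\<in>A. w i) \<le> (\<Prod>i\<in>S. w i)"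
proof -
  have "(\<Prod>i\<in>A. w i) = (\<Prod>i\<in>A - S. w i) * (\<Prod>i\<in>S. w i)"
    using prod.subset_diff[OF assms(2,1)] by simp
  also have "\<dots> \<le> 1 * (\<Prod>i\<in>S. w i)"
  proof (rule mult_right_mono)
    show "(\<Prod>i\<in>A - S. w i) \<le> 1" using assms(3) by (intro prod_le_1) auto
    show "0 \<le> (\<Prod>i\<in>S. w i)" using assms by (intro prod_nonneg) auto
  qed
  finally show ?thesis by simp
qed

definition c32 :: real where "c32 = 32 powr (3/2)"

lemma c32_ge1: "c32 \<ge> 1" unfolding c32_def by (simp add: ge_one_powr_ge_zero)

lemma w_bound:
  assumes h: "h > 0" and q: "h / 16 \<le> real q"
  shows "(real (q div 2) + 1) powr (-3/2) \<le> c32 * h powr (-3/2)"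
proof -
  have "h / 32 \<le> real (q div 2) + 1"
  proof -
    have "real q \<le> 2 * real (q div 2) + 1" by linarith
    then show ?thesis using q by linarith
  qed
  then have "(real (q div 2) + 1) powr (-3/2) \<le> (h / 32) powr (-3/2)"
    using h by (intro powr_mono2') auto
  also have "(h / 32) powr (-3/2) = h powr (-3/2) / 32 powr (-3/2)"
    using h by (simp add: powr_divide)
  also have "\<dots> = c32 * h powr (-3/2)" unfolding c32_def by (simp add: powr_minus field_simps)
  finally show ?thesis .
qed

lemma ratio_good:
  assumes fP: "finite P" and PN: "P \<subseteq> {1..2*n}" and ev: "even (card P)" and sx: "sorted_wrt (<) x"
    and lk: "length k = length x" and n1: "n \<ge> 1"
    and S: "S \<subseteq> {0..length x}" and hpos: "\<forall>i\<in>S. h i > 0"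
    and hq: "\<forall>i\<in>S. h i / 16 \<le> real (card (P \<inter> reg (2*n) x k i))"
  shows "ratio P x k \<le> 2 * (2 * real n) powr (3/2) * c32 ^ (length x + 1) * (\<Prod>i\<in>S. h i powr (-3/2))"
proof -
  define w where "w i = (real (card (P \<inter> reg (2*n) x k i) div 2) + 1) powr (-3/2)" for i
  have rb: "ratio P x k \<le> 2 * (real (card P div 2) + 1) powr (3/2) * (\<Prod>i\<in>{0..length x}. w i)"
    unfolding ratio_def w_def by (rule ratio_bound[OF fP sx lk PN ev])
  have w01: "\<forall>i\<in>{0..length x}. 0 \<le> w i \<and> w i \<le> 1"
  proof
    fix i
    have "1 \<le> real (card (P \<inter> reg (2*n) x k i) div 2) + 1" by simp
    then have "(real (card (P \<inter> reg (2*n) x k i) div 2) + 1) powr (-3/2) \<le> (real (card (P \<inter> reg (2*n) x k i) div 2) + 1) powr 0"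
      by (intro powr_mono) auto
    then have "(real (card (P \<inter> reg (2*n) x k i) div 2) + 1) powr (-3/2) \<le> 1" by simp
    then show "0 \<le> w i \<and> w i \<le> 1" unfolding w_def by simp
  qed
  have cP: "card P \<le> 2 * n" using card_mono[OF _ PN] by simp
  have "real (card P div 2) + 1 \<le> 2 * real n"
  proof -
    have "card P div 2 \<le> n" using cP by linarith
    then show ?thesis using n1 by linarith
  qed
  then have A: "(real (card P div 2) + 1) powr (3/2) \<le> (2 * real n) powr (3/2)"
    by (intro powr_mono2) auto
  have "(\<Prod>i\<in>{0..length x}. w i) \<le> (\<Prod>i\<in>S. w i)"
    by (rule prod_le_subset_le1[OF _ S w01]) simp
  also have "\<dots> \<le> (\<Prod>i\<in>S. c32 * h i powr (-3/2))"
  proof (rule prod_mono)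
    fix i assume i: "i \<in> S"
    show "0 \<le> w i \<and> w i \<le> c32 * h i powr (-3/2)"
      using w01 S i w_bound[of "h i" "card (P \<inter> reg (2*n) x k i)"] hpos hq unfolding w_def by auto
  qed
  also have "\<dots> = c32 ^ card S * (\<Prod>i\<in>S. h i powr (-3/2))"
    by (simp add: prod.distrib)
  also have "\<dots> \<le> c32 ^ (length x + 1) * (\<Prod>i\<in>S. h i powr (-3/2))"
  proof (rule mult_right_mono)
    have "card S \<le> card {0..length x}" using S by (intro card_mono) auto
    then have "card S \<le> length x + 1" by simp
    then show "c32 ^ card S \<le> c32 ^ (length x + 1)" using c32_ge1 by (intro power_increasing) auto
    show "0 \<le> (\<Prod>i\<in>S. h i powr (-3/2))" by (intro prod_nonneg) auto
  qed
  finally have W: "(\<Prod>i\<in>{0..length x}. w i) \<le> c32 ^ (length x + 1) * (\<Prod>i\<in>S. h i powr (-3/2))" .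
  have Wnn: "0 \<le> (\<Prod>i\<in>{0..length x}. w i)" using w01 by (intro prod_nonneg) auto
  have "2 * (real (card P div 2) + 1) powr (3/2) * (\<Prod>i\<in>{0..length x}. w i)
      \<le> 2 * (2 * real n) powr (3/2) * (c32 ^ (length x + 1) * (\<Prod>i\<in>S. h i powr (-3/2)))"
    using A W Wnn by (intro mult_mono) auto
  then show ?thesis using rb by (simp add: mult.assoc)
qed

lemma exp_bound_34:
  fixes f :: real and c :: nat
  assumes "real c = f" "f \<ge> 0"
  shows "2 powr (f / 16) * (3/4) ^ c \<le> exp (- f / 8)"
proof -
  have l2: "ln (2::real) \<le> 1" using ln_le_minus_one[of 2] by simp
  have l34: "ln (3/4::real) \<le> -1/4" using ln_le_minus_one[of "3/4"] by simp
  have "2 powr (f / 16) = exp (f / 16 * ln 2)" by (simp add: powr_def)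
  moreover have "(3/4::real) ^ c = exp (f * ln (3/4))"
    using assms(1) by (simp add: powr_realpow[symmetric] powr_def)
  ultimately have "2 powr (f / 16) * (3/4) ^ c = exp (f * (ln 2 / 16 + ln (3/4)))"
    by (simp add: exp_add[symmetric] algebra_simps)
  also have "\<dots> \<le> exp (- f / 8)"
  proof -
    have "ln 2 / 16 + ln (3/4) \<le> -(1/8::real)" using l2 l34 by linarith
    then have "f * (ln 2 / 16 + ln (3/4)) \<le> f * (-(1/8))" using assms(2) by (intro mult_left_mono) auto
    then show ?thesis by simp
  qed
  finally show ?thesis .
qed

lemma bad_term:
  assumes n2: "n \<ge> 2" and F: "F \<subseteq> {1..2*n}" and st: "(st::nat) \<ge> 1"
    and L: "real (card F) \<ge> 16 * real st * ln (real n)"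
  shows "real (card {C \<in> Pow {1..<2*n}. 16 * real (card (C \<inter> F)) < real (card F)}) / 2 ^ card {1..<2*n}
          \<le> 4/3 * real n powr (- 2 * real st)"
proof -
  define U where "U = {1..<2*n}"
  define cF where "cF = card F"
  have fU: "finite U" unfolding U_def by simp
  have lnpos: "ln (real n) > 0" using n2 by simp
  have "16 * real st * ln (real n) > 0" using st lnpos by simp
  then have cF1: "cF \<ge> 1" using L cF_def by linarith
  have b1: "real (card {C \<in> Pow U. 16 * real (card (C \<inter> F)) < real cF}) / 2 ^ card U
      \<le> 2 powr (real cF / 16) * (3/4) ^ card (U \<inter> F)"
    by (rule bad_count[OF fU])
  have "F \<subseteq> insert (2*n) (U \<inter> F)" using F unfolding U_def by auto
  then have "cF \<le> card (insert (2*n) (U \<inter> F))" unfolding cF_def by (intro card_mono) (auto simp: U_def)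
  also have "\<dots> \<le> card (U \<inter> F) + 1" by (simp add: card_insert_le_m1 card_insert_if)
  finally have cUF: "cF - 1 \<le> card (U \<inter> F)" by simp
  have "(3/4::real) ^ card (U \<inter> F) \<le> (3/4) ^ (cF - 1)" by (rule power_decreasing[OF cUF]) auto
  also have "\<dots> = 4/3 * (3/4) ^ cF"
  proof -
    have "(3/4::real) ^ cF = (3/4) * (3/4) ^ (cF - 1)" using cF1 by (metis Suc_diff_1 less_le_trans zero_less_one power_Suc)
    then show ?thesis by simp
  qed
  finally have p: "(3/4::real) ^ card (U \<inter> F) \<le> 4/3 * (3/4) ^ cF" .
  have "2 powr (real cF / 16) * (3/4) ^ card (U \<inter> F) \<le> 2 powr (real cF / 16) * (4/3 * (3/4) ^ cF)"
    using p by (intro mult_left_mono) auto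
  also have "\<dots> = 4/3 * (2 powr (real cF / 16) * (3/4) ^ cF)" by simp
  also have "\<dots> \<le> 4/3 * exp (- real cF / 8)"
    using exp_bound_34[of cF "real cF"] by (simp add: mult.commute)
  also have "\<dots> \<le> 4/3 * exp (- 2 * real st * ln (real n))"
    using L cF_def by simp
  also have "exp (- 2 * real st * ln (real n)) = real n powr (- 2 * real st)"
    using n2 by (simp add: powr_def)
  finally show ?thesis using b1 unfolding U_def cF_def by linarith
qed

lemma prod_lower:
  assumes fS: "finite S" and cS: "card S \<le> K" and h: "\<forall>i\<in>S. 0 < h i \<and> h i \<le> 2 * real n" and n1: "n \<ge> 1"
  shows "((2 * real n) powr (-3/2)) ^ K \<le> (\<Prod>i\<in>S. h i powr (-3/2))"
proof -
  have b1: "(2 * real n) powr (-3/2) \<le> 1"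
  proof -
    have "(2 * real n) powr (-3/2) \<le> (2 * real n) powr 0" using n1 by (intro powr_mono) auto
    then show ?thesis using n1 by simp
  qed
  have b0: "0 \<le> (2 * real n) powr (-3/2)" by simp
  have "((2 * real n) powr (-3/2)) ^ K \<le> ((2 * real n) powr (-3/2)) ^ card S"
    by (rule power_decreasing[OF cS b0 b1])
  also have "\<dots> = (\<Prod>i\<in>S. (2 * real n) powr (-3/2))" by simp
  also have "\<dots> \<le> (\<Prod>i\<in>S. h i powr (-3/2))"
  proof (rule prod_mono)
    fix i assume "i \<in> S"
    then have "0 < h i" "h i \<le> 2 * real n" using h by auto
    then show "0 \<le> (2 * real n) powr (-3/2) \<and> (2 * real n) powr (-3/2) \<le> h i powr (-3/2)"
      by (auto intro: powr_mono2')
  qed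
  finally show ?thesis .
qed

lemma ratio_le1: "0 \<le> ratio P x k \<and> ratio P x k \<le> 1" if "finite P"
proof -
  have "card {M \<in> catalan_matchings P. arcs_in x k M} \<le> card (catalan_matchings P)"
    by (rule card_mono[OF cm_finite[OF that]]) auto
  then show ?thesis unfolding ratio_def
    by (cases "card (catalan_matchings P) = 0") (auto simp: divide_le_eq_1)
qed

definition beta :: "nat \<Rightarrow> nat \<Rightarrow> real" where
  "beta s t = 32 * c32 ^ (s + 1) * c32 ^ (t + 1) + real (s + t + 2) * (4/3) * 2 powr (3/2 * real (s + t + 2))"

lemma beta_pos: "beta s t > 0"
proof -
  have "c32 > 0" using c32_ge1 by linarith
  then show ?thesis unfolding beta_def by (intro add_pos_pos) auto
qed

lemma powr_pow_mult: "(x::real) > 0 \<Longrightarrow> (x powr a) ^ m = x powr (a * real m)"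
  by (simp add: powr_realpow[symmetric] powr_powr)

lemma main_bound:
  fixes n :: nat and x k y l :: "nat list"
  assumes n2: "n \<ge> 2" and s0: "length x > 0"
    and lk: "length k = length x" and ll: "length l = length y"
    and sx: "sorted_wrt (<) x" and sy: "sorted_wrt (<) y"
    and bx: "\<forall>i<length x. x!i + k!i \<le> 2*n" and bY: "\<forall>j<length y. y!j + l!j \<le> 2*n"
  shows "measure_pmf.prob (CP n) (event_A n x k y l)
    \<le> beta (length x) (length y) * real n ^ 3
      * (\<Prod>i\<in>{i\<in>{0..length x}. real (free_count n x k y l i) \<ge> 16 * real (length x + length y) * ln (real n)}.
           real (free_count n x k y l i) powr (-3/2))
      * (\<Prod>j\<in>{j\<in>{0..length y}. real (free_count n y l x k j) \<ge> 16 * real (length x + length y) * ln (real n)}.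
           real (free_count n y l x k j) powr (-3/2))"
proof -
  define s where "s = length x"
  define t where "t = length y"
  define L where "L = 16 * real (s + t) * ln (real n)"
  define f where "f i = real (free_count n x k y l i)" for i
  define g where "g j = real (free_count n y l x k j)" for j
  define S where "S = {i\<in>{0..s}. f i \<ge> L}"
  define T where "T = {j\<in>{0..t}. g j \<ge> L}"
  define PS where "PS = (\<Prod>i\<in>S. f i powr (-3/2))"
  define PT where "PT = (\<Prod>j\<in>T. g j powr (-3/2))"
  define FX where "FX i = freeset n x k y l i" for i
  define FY where "FY j = freeset n y l x k j" for j
  define U where "U = {1..<2*n}"
  define V where "V = {1..2*n}"
  define good where "good C \<longleftrightarrow> (\<forall>i\<in>S. f i \<le> 16 * real (card (C \<inter> FX i))) \<and> (\<forall>j\<in>T. g j \<le> 16 * real (card ((U - C) \<inter> FY j)))" for C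
  define \<phi> where "\<phi> C = ratio (Rf n C) x k * ratio (V - Rf n C) y l" for C
  define B where "B = 32 * c32 ^ (s + 1) * c32 ^ (t + 1) * real n ^ 3 * PS * PT"
  have n1: "n \<ge> 1" using n2 by simp
  have lnpos: "ln (real n) > 0" using n2 by simp
  have "s > 0" using s0 s_def by simp
  then have "real (s + t) > 0" by simp
  then have Lpos: "L > 0" unfolding L_def using lnpos by simp
  have fcard: "f i = real (card (FX i))" for i unfolding f_def FX_def by (simp add: free_count_card)
  have gcard: "g j = real (card (FY j))" for j unfolding g_def FY_def by (simp add: free_count_card)
  have Sfin: "finite S" "S \<subseteq> {0..s}" unfolding S_def by auto
  have Tfin: "finite T" "T \<subseteq> {0..t}" unfolding T_def by auto
  have fpos: "\<forall>i\<in>S. f i > 0" using Lpos unfolding S_def by auto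
  have gpos: "\<forall>j\<in>T. g j > 0" using Lpos unfolding T_def by auto
  have FXsub: "i \<le> s \<Longrightarrow> FX i \<subseteq> {1..2*n}" for i unfolding FX_def s_def using freeset_sub bx by blast
  have FYsub: "j \<le> t \<Longrightarrow> FY j \<subseteq> {1..2*n}" for j unfolding FY_def t_def using freeset_sub bY by blast
  have PSnn: "PS \<ge> 0" unfolding PS_def by (intro prod_nonneg) auto
  have PTnn: "PT \<ge> 0" unfolding PT_def by (intro prod_nonneg) auto
  have c32pos: "c32 > 0" using c32_ge1 by linarith
  have phi01: "0 \<le> \<phi> C \<and> \<phi> C \<le> 1" if C: "C \<in> Pow U" for C
  proof -
    have CU: "C \<subseteq> {1..<2*n}" using C U_def by auto
    note rp = Rf_props[OF CU]
    have "finite (V - Rf n C)" unfolding V_def by simp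
    then show ?thesis unfolding \<phi>_def using ratio_le1[OF rp(3), of x k] ratio_le1[of "V - Rf n C" y l]
      by (simp add: mult_le_one)
  qed
  have phi_good: "\<phi> C \<le> B" if C: "C \<in> Pow U" and gd: "good C" for C
  proof -
    have CU: "C \<subseteq> {1..<2*n}" using C U_def by auto
    note rp = Rf_props[OF CU]
    define R where "R = Rf n C"
    have r1: "ratio R x k \<le> 2 * (2 * real n) powr (3/2) * c32 ^ (length x + 1) * (\<Prod>i\<in>S. f i powr (-3/2))"
    proof (rule ratio_good[OF rp(3)[folded R_def] rp(1)[folded R_def] rp(2)[folded R_def] sx lk n1])
      show "S \<subseteq> {0..length x}" using Sfin s_def by simp
      show "\<forall>i\<in>S. 0 < f i" by (rule fpos)
      show "\<forall>i\<in>S. f i / 16 \<le> real (card (R \<inter> reg (2 * n) x k i))"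
      proof
        fix i assume i: "i \<in> S"
        have "C \<inter> FX i \<subseteq> R \<inter> reg (2 * n) x k i"
          using rp(5) freeset_reg[of n x k y l i] unfolding R_def FX_def by auto
        then have "card (C \<inter> FX i) \<le> card (R \<inter> reg (2 * n) x k i)"
          by (intro card_mono) (use rp(3) R_def in auto)
        then show "f i / 16 \<le> real (card (R \<inter> reg (2 * n) x k i))" using gd i unfolding good_def by auto
      qed
    qed
    have VR: "V - R \<subseteq> {1..2*n}" "finite (V - R)" "even (card (V - R))"
      using rp(4) unfolding V_def R_def by auto
    have r2: "ratio (V - R) y l \<le> 2 * (2 * real n) powr (3/2) * c32 ^ (length y + 1) * (\<Prod>j\<in>T. g j powr (-3/2))"
    proof (rule ratio_good[OF VR(2) VR(1) VR(3) sy ll n1])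
      show "T \<subseteq> {0..length y}" using Tfin t_def by simp
      show "\<forall>j\<in>T. 0 < g j" by (rule gpos)
      show "\<forall>j\<in>T. g j / 16 \<le> real (card ((V - R) \<inter> reg (2 * n) y l j))"
      proof
        fix j assume j: "j \<in> T"
        have "U - C \<subseteq> V - R" using rp(6) unfolding U_def V_def R_def by auto
        then have "(U - C) \<inter> FY j \<subseteq> (V - R) \<inter> reg (2 * n) y l j"
          using freeset_reg[of n y l x k j] unfolding FY_def by auto
        then have "card ((U - C) \<inter> FY j) \<le> card ((V - R) \<inter> reg (2 * n) y l j)"
          by (intro card_mono) (use VR in auto)
        then show "g j / 16 \<le> real (card ((V - R) \<inter> reg (2 * n) y l j))" using gd j unfolding good_def by auto
      qed
    qed
    have nn1: "0 \<le> ratio R x k" using ratio_le1[OF rp(3)[folded R_def]] by simp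
    have "\<phi> C = ratio R x k * ratio (V - R) y l" unfolding \<phi>_def R_def ..
    also have "\<dots> \<le> (2 * (2 * real n) powr (3/2) * c32 ^ (s + 1) * PS) * (2 * (2 * real n) powr (3/2) * c32 ^ (t + 1) * PT)"
      using r1 r2 nn1 c32pos ratio_le1[OF VR(2), of y l] unfolding PS_def PT_def s_def t_def
      by (intro mult_mono) (auto intro!: mult_nonneg_nonneg prod_nonneg)
    also have "\<dots> = 4 * ((2 * real n) powr (3/2) * (2 * real n) powr (3/2)) * c32 ^ (s + 1) * c32 ^ (t + 1) * PS * PT"
      by (simp add: algebra_simps)
    also have "(2 * real n) powr (3/2) * (2 * real n) powr (3/2) = 8 * real n ^ 3"
    proof -
      have "(2 * real n) powr (3/2) * (2 * real n) powr (3/2) = (2 * real n) powr (3/2 + 3/2)"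
        by (rule powr_add[symmetric])
      also have "(3/2 + 3/2 :: real) = real (3::nat)" by simp
      also have "(2 * real n) powr real (3::nat) = (2 * real n) ^ 3" using n1 by (intro powr_realpow) simp
      finally show ?thesis by simp
    qed
    finally show ?thesis unfolding B_def by (simp add: algebra_simps)
  qed

  have Bnn: "B \<ge> 0" unfolding B_def using PSnn PTnn c32pos by simp
  have fPU: "finite (Pow U)" unfolding U_def by simp
  have sumb: "(\<Sum>C\<in>Pow U. \<phi> C) \<le> real (card (Pow U)) * B + real (card {C\<in>Pow U. \<not> good C})"
  proof -
    have "(\<Sum>C\<in>Pow U. \<phi> C) \<le> (\<Sum>C\<in>Pow U. B + (if good C then 0 else 1))"
    proof (rule sum_mono)
      fix C assume C: "C \<in> Pow U"
      show "\<phi> C \<le> B + (if good C then 0 else 1)"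
        using phi_good[OF C] phi01[OF C] Bnn by (cases "good C") auto
    qed
    also have "\<dots> = real (card (Pow U)) * B + (\<Sum>C\<in>Pow U. (if good C then 0 else 1))"
      by (simp add: sum.distrib)
    also have "(\<Sum>C\<in>Pow U. (if good C then 0 else 1::real)) = real (card {C\<in>Pow U. \<not> good C})"
    proof -
      have "(\<Sum>C\<in>Pow U. (if good C then 0 else 1::real)) = (\<Sum>C\<in>{C\<in>Pow U. \<not> good C}. 1)"
        using fPU by (simp add: sum.If_cases Compl_eq Int_def conj_commute)
      then show ?thesis by simp
    qed
    finally show ?thesis .
  qed
  define BX where "BX i = {C\<in>Pow U. 16 * real (card (C \<inter> FX i)) < real (card (FX i))}" for i
  define BY where "BY j = {C\<in>Pow U. 16 * real (card ((U - C) \<inter> FY j)) < real (card (FY j))}" for j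
  have badsub: "{C\<in>Pow U. \<not> good C} \<subseteq> (\<Union>i\<in>S. BX i) \<union> (\<Union>j\<in>T. BY j)"
    unfolding good_def BX_def BY_def fcard gcard by auto
  have fBX: "finite (BX i)" for i unfolding BX_def using fPU by simp
  have fBY: "finite (BY j)" for j unfolding BY_def using fPU by simp
  have cbad: "real (card {C\<in>Pow U. \<not> good C}) \<le> (\<Sum>i\<in>S. real (card (BX i))) + (\<Sum>j\<in>T. real (card (BY j)))"
  proof -
    have "card {C\<in>Pow U. \<not> good C} \<le> card ((\<Union>i\<in>S. BX i) \<union> (\<Union>j\<in>T. BY j))"
      by (rule card_mono[OF _ badsub]) (use Sfin Tfin fBX fBY in auto)
    also have "\<dots> \<le> card (\<Union>i\<in>S. BX i) + card (\<Union>j\<in>T. BY j)" by (rule card_Un_le)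
    also have "\<dots> \<le> (\<Sum>i\<in>S. card (BX i)) + (\<Sum>j\<in>T. card (BY j))"
      by (intro add_mono card_UN_le) (use Sfin Tfin in auto)
    finally show ?thesis by (simp flip: of_nat_sum of_nat_add)
  qed
  have st1: "s + t \<ge> 1" using \<open>s > 0\<close> by simp
  have eX: "real (card (BX i)) / 2 ^ card U \<le> 4/3 * real n powr (- 2 * real (s + t))" if i: "i \<in> S" for i
  proof -
    have "real (card (FX i)) \<ge> 16 * real (s + t) * ln (real n)" using i fcard unfolding S_def L_def by auto
    moreover have "i \<le> s" using i Sfin(2) by auto
    then have "FX i \<subseteq> {1..2*n}" by (rule FXsub)
    ultimately show ?thesis unfolding BX_def U_def using bad_term[OF n2 _ st1] by blast
  qed
  have eY: "real (card (BY j)) / 2 ^ card U \<le> 4/3 * real n powr (- 2 * real (s + t))" if j: "j \<in> T" for j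
  proof -
    have "real (card (FY j)) \<ge> 16 * real (s + t) * ln (real n)" using j gcard unfolding T_def L_def by auto
    moreover have "j \<le> t" using j Tfin(2) by auto
    then have "FY j \<subseteq> {1..2*n}" by (rule FYsub)
    moreover have "card (BY j) = card {C\<in>Pow U. 16 * real (card (C \<inter> FY j)) < real (card (FY j))}"
      unfolding BY_def using bad_count_compl[of U "\<lambda>D. 16 * real (card (D \<inter> FY j)) < real (card (FY j))"] U_def by simp
    ultimately show ?thesis unfolding U_def using bad_term[OF n2 _ st1] by simp
  qed
  define \<epsilon> where "\<epsilon> = 4/3 * real n powr (- 2 * real (s + t))"
  have cPU: "real (card (Pow U)) = 2 ^ card U" using fPU unfolding U_def by (simp add: card_Pow)
  have prob1: "measure_pmf.prob (CP n) (event_A n x k y l) \<le> (\<Sum>C\<in>Pow U. \<phi> C) / 2 ^ card U"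
    using CP_bound[of n x k y l] unfolding \<phi>_def U_def V_def cPU[unfolded U_def] .
  have "(\<Sum>C\<in>Pow U. \<phi> C) / 2 ^ card U \<le> (real (card (Pow U)) * B + real (card {C\<in>Pow U. \<not> good C})) / 2 ^ card U"
    by (rule divide_right_mono[OF sumb]) simp
  also have "\<dots> = B + real (card {C\<in>Pow U. \<not> good C}) / 2 ^ card U"
    unfolding cPU by (simp add: add_divide_distrib)
  also have "\<dots> \<le> B + ((\<Sum>i\<in>S. real (card (BX i))) + (\<Sum>j\<in>T. real (card (BY j)))) / 2 ^ card U"
    by (intro add_left_mono divide_right_mono cbad) simp
  also have "((\<Sum>i\<in>S. real (card (BX i))) + (\<Sum>j\<in>T. real (card (BY j)))) / 2 ^ card U
      = (\<Sum>i\<in>S. real (card (BX i)) / 2 ^ card U) + (\<Sum>j\<in>T. real (card (BY j)) / 2 ^ card U)"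
    by (simp add: add_divide_distrib sum_divide_distrib)
  also have "\<dots> \<le> (\<Sum>i\<in>S. \<epsilon>) + (\<Sum>j\<in>T. \<epsilon>)"
    using eX eY unfolding \<epsilon>_def by (intro add_mono sum_mono) auto
  also have "\<dots> = real (card S + card T) * \<epsilon>" by (simp add: algebra_simps)
  finally have prob2: "measure_pmf.prob (CP n) (event_A n x k y l) \<le> B + real (card S + card T) * \<epsilon>"
    using prob1 by linarith
  have fle: "\<forall>i\<in>S. 0 < f i \<and> f i \<le> 2 * real n"
  proof
    fix i assume i: "i \<in> S"
    have "i \<le> s" using i Sfin(2) by auto
    then have "card (FX i) \<le> card {1..2*n}" using FXsub by (intro card_mono) auto
    then show "0 < f i \<and> f i \<le> 2 * real n" using fpos i fcard by auto
  qed
  have gle: "\<forall>j\<in>T. 0 < g j \<and> g j \<le> 2 * real n"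
  proof
    fix j assume j: "j \<in> T"
    have "j \<le> t" using j Tfin(2) by auto
    then have "card (FY j) \<le> card {1..2*n}" using FYsub by (intro card_mono) auto
    then show "0 < g j \<and> g j \<le> 2 * real n" using gpos j gcard by auto
  qed
  have cS: "card S \<le> s + 1" using card_mono[OF _ Sfin(2)] by simp
  have cT: "card T \<le> t + 1" using card_mono[OF _ Tfin(2)] by simp
  define m where "m = s + t + 2"
  define q where "q = (2 * real n) powr (-3/2)"
  have qpos: "q > 0" unfolding q_def using n1 by simp
  have PSl: "q ^ (s + 1) \<le> PS" unfolding PS_def q_def by (rule prod_lower[OF Sfin(1) cS fle n1])
  have PTl: "q ^ (t + 1) \<le> PT" unfolding PT_def q_def by (rule prod_lower[OF Tfin(1) cT gle n1])
  have "q ^ m \<le> PS * PT"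
  proof -
    have "q ^ m = q ^ (s + 1) * q ^ (t + 1)" unfolding m_def by (simp add: power_add[symmetric])
    also have "\<dots> \<le> PS * PT" using PSl PTl qpos PSnn by (intro mult_mono) auto
    finally show ?thesis .
  qed
  moreover have "q ^ m = 2 powr (-3/2 * real m) * real n powr (-3/2 * real m)"
  proof -
    have "q ^ m = (2 * real n) powr (-3/2 * real m)" unfolding q_def by (rule powr_pow_mult) (use n1 in simp)
    also have "\<dots> = 2 powr (-3/2 * real m) * real n powr (-3/2 * real m)" by (rule powr_mult)
    finally show ?thesis .
  qed
  ultimately have key: "2 powr (-3/2 * real m) * real n powr (-3/2 * real m) \<le> PS * PT" by simp
  have "real n powr (- 2 * real (s + t)) \<le> real n powr (-3/2 * real (s + t))"
  proof (rule powr_mono)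
    have "0 \<le> real (s + t)" by simp
    then show "- 2 * real (s + t) \<le> -3/2 * real (s + t)" by linarith
    show "1 \<le> real n" using n1 by simp
  qed
  also have "real n powr (-3/2 * real (s + t)) = real n ^ 3 * real n powr (-3/2 * real m)"
  proof -
    have "real n ^ 3 * real n powr (-3/2 * real m) = real n powr (real (3::nat)) * real n powr (-3/2 * real m)"
      using powr_realpow[of "real n" 3] n1 by simp
    also have "\<dots> = real n powr (real (3::nat) + -3/2 * real m)" by (rule powr_add[symmetric])
    also have "real (3::nat) + -3/2 * real m = -3/2 * real (s + t)" unfolding m_def by (simp add: field_simps)
    finally show ?thesis by (rule sym)
  qed
  also have "\<dots> = 2 powr (3/2 * real m) * (real n ^ 3 * (2 powr (-3/2 * real m) * real n powr (-3/2 * real m)))"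
    by (simp add: powr_minus field_simps)
  also have "\<dots> \<le> 2 powr (3/2 * real m) * (real n ^ 3 * (PS * PT))"
    using key by (intro mult_left_mono) auto
  finally have err: "real n powr (- 2 * real (s + t)) \<le> 2 powr (3/2 * real m) * (real n ^ 3 * (PS * PT))" .
  have "real (card S + card T) * \<epsilon> \<le> real m * \<epsilon>"
    using cS cT unfolding m_def \<epsilon>_def by (intro mult_right_mono) auto
  also have "\<dots> \<le> real m * (4/3 * (2 powr (3/2 * real m) * (real n ^ 3 * (PS * PT))))"
    unfolding \<epsilon>_def using err by (intro mult_left_mono) auto
  finally have errb: "real (card S + card T) * \<epsilon> \<le> real m * (4/3) * 2 powr (3/2 * real m) * real n ^ 3 * PS * PT"
    by (simp add: algebra_simps)
  have betaeq: "beta s t * real n ^ 3 * PS * PT = B + real m * (4/3) * 2 powr (3/2 * real m) * real n ^ 3 * PS * PT"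
    unfolding beta_def B_def m_def by (simp add: algebra_simps)
  have goal': "measure_pmf.prob (CP n) (event_A n x k y l) \<le> beta s t * real n ^ 3 * PS * PT"
    using prob2 errb betaeq by linarith
  show ?thesis using goal' unfolding PS_def PT_def S_def T_def f_def g_def L_def s_def t_def .
qed

theorem lemma4p1:
  "\<forall>s t :: nat. 0 < s \<and> 0 < t \<longrightarrow>
     (\<exists>\<beta> :: real. \<beta> > 0 \<and> (\<exists>N :: int. \<forall>n :: nat. int n \<ge> N \<longrightarrow>
       (\<forall>x k y l. length x = s \<and> length k = s \<and> length y = t \<and> length l = t \<and>
          sorted_wrt (<) x \<and> sorted_wrt (<) y \<and>
          (\<forall>i<s. 1 \<le> x!i \<and> 1 \<le> k!i \<and> x!i + k!i \<le> 2*n) \<and>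
          (\<forall>j<t. 1 \<le> y!j \<and> 1 \<le> l!j \<and> y!j + l!j \<le> 2*n) \<and>
          valid_quad n x k y l \<longrightarrow>
          measure_pmf.prob (CP n) (event_A n x k y l)
            \<le> \<beta> * real n ^ 3
              * (\<Prod>i\<in>{i\<in>{0..s}. real (free_count n x k y l i) \<ge> 16 * real (s + t) * ln (real n)}.
                   real (free_count n x k y l i) powr (-3/2))
              * (\<Prod>j\<in>{j\<in>{0..t}. real (free_count n y l x k j) \<ge> 16 * real (s + t) * ln (real n)}.
                   real (free_count n y l x k j) powr (-3/2)))))"
proof (intro allI impI)
  fix s t :: nat
  assume st: "0 < s \<and> 0 < t"
  have main: "measure_pmf.prob (CP n) (event_A n x k y l)
            \<le> beta s t * real n ^ 3
              * (\<Prod>i\<in>{i\<in>{0..s}. real (free_count n x k y l i) \<ge> 16 * real (s + t) * ln (real n)}.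
                   real (free_count n x k y l i) powr (-3/2))
              * (\<Prod>j\<in>{j\<in>{0..t}. real (free_count n y l x k j) \<ge> 16 * real (s + t) * ln (real n)}.
                   real (free_count n y l x k j) powr (-3/2))"
    if n: "int n \<ge> 2" and H: "length x = s \<and> length k = s \<and> length y = t \<and> length l = t \<and>
          sorted_wrt (<) x \<and> sorted_wrt (<) y \<and>
          (\<forall>i<s. 1 \<le> x!i \<and> 1 \<le> k!i \<and> x!i + k!i \<le> 2*n) \<and>
          (\<forall>j<t. 1 \<le> y!j \<and> 1 \<le> l!j \<and> y!j + l!j \<le> 2*n) \<and>
          valid_quad n x k y l" for n x k y l
  proof -
    have n2: "n \<ge> 2" using n by simp
    have lx: "length x = s" and lk: "length k = length x" and ly: "length y = t" and ll: "length l = length y"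
      using H by auto
    have sx: "sorted_wrt (<) x" and sy: "sorted_wrt (<) y" using H by auto
    have bx: "\<forall>i<length x. x!i + k!i \<le> 2*n" using H by auto
    have bY: "\<forall>j<length y. y!j + l!j \<le> 2*n" using H by auto
    have s0: "length x > 0" using st lx by simp
    show ?thesis using main_bound[OF n2 s0 lk ll sx sy bx bY] unfolding lx ly .
  qed
  show "\<exists>\<beta> :: real. \<beta> > 0 \<and> (\<exists>N :: int. \<forall>n :: nat. int n \<ge> N \<longrightarrow>
       (\<forall>x k y l. length x = s \<and> length k = s \<and> length y = t \<and> length l = t \<and>
          sorted_wrt (<) x \<and> sorted_wrt (<) y \<and>
          (\<forall>i<s. 1 \<le> x!i \<and> 1 \<le> k!i \<and> x!i + k!i \<le> 2*n) \<and>
          (\<forall>j<t. 1 \<le> y!j \<and> 1 \<le> l!j \<and> y!j + l!j \<le> 2*n) \<and>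
          valid_quad n x k y l \<longrightarrow>
          measure_pmf.prob (CP n) (event_A n x k y l)
            \<le> \<beta> * real n ^ 3
              * (\<Prod>i\<in>{i\<in>{0..s}. real (free_count n x k y l i) \<ge> 16 * real (s + t) * ln (real n)}.
                   real (free_count n x k y l i) powr (-3/2))
              * (\<Prod>j\<in>{j\<in>{0..t}. real (free_count n y l x k j) \<ge> 16 * real (s + t) * ln (real n)}.
                   real (free_count n y l x k j) powr (-3/2))))"
    using main beta_pos[of s t] by blast
qed

end
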